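(* Let $\alpha\in\mathbb R$. There exists $\beta_0<0$ such that for every $\beta\in[\beta_0,0)$ and $\delta\in\big(0,e^{-1/\sqrt{|\beta|}}\big)$, $$\Big\|\beta U\sum_{r=1}^q\tilde V_r^2\Big\|_{L^{4/3}(\mathbb R^4)}+\Big\|\Delta\tilde V+\tilde V^3+\beta U^2\tilde V+\alpha\tilde V\sum_{r=2}^q\tilde V_r^2\Big\|_{L^{4/3}(\mathbb R^4)}=\mathcal O(|\beta|\delta),$$ i.e. the left-hand side is bounded by $C|\beta|\delta$ with $C$ independent of $\beta,\delta$.
   Context: Let $q\geq2$ and $k\geq2$ be integers. Let $U(x)=\frac{2\sqrt2}{1+|x|^2}$ on $\mathbb R^4$, $U_{\delta,\xi}(x)=\frac1\delta U(\frac{x-\xi}\delta)$. For $\delta\in(0,1)$ let $\rho=\sqrt{1-\delta^2}$, $\tilde\xi_\ell=\frac{\rho}{\sqrt2}\big(\cos\frac{2\pi(\ell-1)}k,\sin\frac{2\pi(\ell-1)}k,\cos\frac{2\pi(\ell-1)}k,\sin\frac{2\pi(\ell-1)}k\big)$, $\ell=1,\dots,k$, and $\tilde V=\sum_{\ell=1}^kU_{\delta,\tilde\xi_\ell}$. For $\theta\in\mathbb R$, $\mathscr T_\theta(x_1,x_2,x_3,x_4)=(x_1\cos\theta-x_2\sin\theta,\,x_1\sin\theta+x_2\cos\theta,\,x_3\cos\theta+x_4\sin\theta,\,-x_3\sin\theta+x_4\cos\theta)$, $\mathscr T_r=\mathscr T_{(r-1)\pi/q}$, and $\tilde V_r(x)=\tilde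 V(\mathscr T_rx)$ for $r=1,\dots,q$ (so $\tilde V_1=\tilde V$). *)

theory Defs
  imports "HOL-Analysis.Analysis"
begin

definition U :: "real^4 \<Rightarrow> real" where
  "U x = 2 * sqrt 2 / (1 + (norm x)^2)"

definition Ubub :: "real \<Rightarrow> real^4 \<Rightarrow> real^4 \<Rightarrow> real" where
  "Ubub \<delta> \<xi> x = (1 / \<delta>) * U ((1 / \<delta>) *\<^sub>R (x - \<xi>))"

definition xi_tilde :: "nat \<Rightarrow> real \<Rightarrow> nat \<Rightarrow> real^4" where
  "xi_tilde k \<delta> l =
    (let \<rho> = sqrt (1 - \<delta>^2); \<theta> = 2 * pi * (real l - 1) / real k in
     vector [\<rho> / sqrt 2 * cos \<theta>, \<rho> / sqrt 2 * sin \<theta>,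
             \<rho> / sqrt 2 * cos \<theta>, \<rho> / sqrt 2 * sin \<theta>])"

definition V_tilde :: "nat \<Rightarrow> real \<Rightarrow> real^4 \<Rightarrow> real" where
  "V_tilde k \<delta> x = (\<Sum>l=1..k. Ubub \<delta> (xi_tilde k \<delta> l) x)"

definition rotT :: "real \<Rightarrow> real^4 \<Rightarrow> real^4" where
  "rotT \<theta> x = vector [x$1 * cos \<theta> - x$2 * sin \<theta>, x$1 * sin \<theta> + x$2 * cos \<theta>,
                       x$3 * cos \<theta> + x$4 * sin \<theta>, - x$3 * sin \<theta> + x$4 * cos \<theta>]"

definition V_r :: "nat \<Rightarrow> nat \<Rightarrow> real \<Rightarrow> nat \<Rightarrow> real^4 \<Rightarrow> real" where
  "V_r q k \<delta> r x = V_tilde k \<delta> (rotT ((real r - 1) * pi / real q) x)"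

definition partial :: "4 \<Rightarrow> (real^4 \<Rightarrow> real) \<Rightarrow> real^4 \<Rightarrow> real" where
  "partial i f x = deriv (\<lambda>t. f (x + t *\<^sub>R axis i 1)) 0"

definition laplacian :: "(real^4 \<Rightarrow> real) \<Rightarrow> real^4 \<Rightarrow> real" where
  "laplacian f x = (\<Sum>i\<in>UNIV. partial i (partial i f) x)"

text \<open>L^p norm (for functions known to be in L^p) w.r.t. Lebesgue measure on R^4.\<close>
definition Lp_norm :: "real \<Rightarrow> (real^4 \<Rightarrow> real) \<Rightarrow> real" where
  "Lp_norm p f = (\<integral>x. \<bar>f x\<bar> powr p \<partial>lborel) powr (1 / p)"

definition in_Lp :: "real \<Rightarrow> (real^4 \<Rightarrow> real) \<Rightarrow> bool" where
  "in_Lp p f \<longleftrightarrow> f \<in> borel_measurable lborel \<and> integrable lborel (\<lambda>x. \<bar>f x\<bar> powr p)"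

end

theory Submission
  imports Defs "HOL-Real_Asymp.Real_Asymp"
begin


lemma oneside_inf:
  fixes p :: real assumes p: "p > 1"
  shows "(\<integral>\<^sup>+x. ennreal ((1+x) powr (-p)) * indicator {0..} x \<partial>lborel) = ennreal (1/(p-1))"
proof -
  have "(\<integral>\<^sup>+x. ennreal ((1+x) powr (-p)) * indicator {0..} x \<partial>lborel)
        = 0 - (-((1+0) powr (1-p))/(p-1))"
  proof (rule nn_integral_FTC_atLeast)
    show "(\<lambda>x. (1+x) powr (-p)) \<in> borel_measurable borel" by measurable
    fix x :: real assume x: "0 \<le> x"
    show "0 \<le> (1+x) powr (-p)" by simp
    show "((\<lambda>x. -((1+x) powr (1-p))/(p-1)) has_real_derivative (1+x) powr (-p)) (at x)"
    proof -
      have h1: "((\<lambda>x. (1+x) powr (1-p)) has_real_derivative (1-p) * (1+x) powr (1-p-1) * (0+1)) (at x)"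
        using x by (intro derivative_eq_intros DERIV_powr) auto
      have h2: "((\<lambda>x. -((1+x) powr (1-p))/(p-1)) has_real_derivative -((1-p) * (1+x) powr (1-p-1) * (0+1))/(p-1)) (at x)"
        using DERIV_cdivide[OF DERIV_minus[OF h1]] .
      have e: "-((1-p) * (1+x) powr (1-p-1) * (0+1))/(p-1) = (1+x) powr (-p)" using p by (simp add: field_simps)
      show ?thesis using h2 unfolding e .
    qed
  next
    have "((\<lambda>x. (1+x) powr (1-p)) \<longlongrightarrow> 0) at_top" using p by real_asymp
    from tendsto_divide[OF tendsto_minus[OF this] tendsto_const[of "p-1"]]
    show "((\<lambda>x. -((1+x) powr (1-p))/(p-1)) \<longlongrightarrow> 0) at_top" using p by simp
  qed
  then show ?thesis by simp
qed

lemma oneside_fin: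
  fixes p L :: real assumes p: "p < 1" and L: "0 \<le> L"
  shows "(\<integral>\<^sup>+x. ennreal ((1+x) powr (-p)) * indicator {0..L} x \<partial>lborel) = ennreal (((1+L) powr (1-p) - 1)/(1-p))"
proof -
  have "(\<integral>\<^sup>+x. ennreal ((1+x) powr (-p)) * indicator {0..L} x \<partial>lborel)
        = (1+L) powr (1-p)/(1-p) - (1+0) powr (1-p)/(1-p)"
  proof (rule nn_integral_FTC_Icc)
    show "(\<lambda>x. (1+x) powr (-p)) \<in> borel_measurable borel" by measurable
    show "0 \<le> L" by fact
    fix x :: real assume x: "x \<in> {0..L}"
    show "0 \<le> (1+x) powr (-p)" by simp
    have h1: "((\<lambda>x. (1+x) powr (1-p)) has_real_derivative (1-p) * (1+x) powr (1-p-1) * (0+1)) (at x)"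
      using x by (intro derivative_eq_intros DERIV_powr) auto
    have h2: "((\<lambda>x. (1+x) powr (1-p)/(1-p)) has_real_derivative ((1-p) * (1+x) powr (1-p-1) * (0+1))/(1-p)) (at x)"
      using DERIV_cdivide[OF h1] .
    have e: "((1-p) * (1+x) powr (1-p-1) * (0+1))/(1-p) = (1+x) powr (-p)" using p by (simp add: field_simps)
    show "((\<lambda>x. (1+x) powr (1-p)/(1-p)) has_real_derivative (1+x) powr (-p)) (at x)" using h2 unfolding e .
  qed
  then show ?thesis by (simp add: diff_divide_distrib)
qed

lemma even_bound:
  fixes h :: "real \<Rightarrow> real"
  assumes [measurable]: "h \<in> borel_measurable borel"
  shows "(\<integral>\<^sup>+x. ennreal (h \<bar>x\<bar>) \<partial>lborel) \<le> 2 * (\<integral>\<^sup>+x. ennreal (h x) * indicator {0..} x \<partial>lborel)"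
proof -
  let ?f = "\<lambda>x. ennreal (h x) * indicator {0..} x"
  have "(\<integral>\<^sup>+x. ennreal (h \<bar>x\<bar>) \<partial>lborel) \<le> (\<integral>\<^sup>+x. ?f x + ?f (0 + (-1) * x) \<partial>lborel)"
    by (intro nn_integral_mono) (auto split: split_indicator)
  also have "\<dots> = (\<integral>\<^sup>+x. ?f x \<partial>lborel) + (\<integral>\<^sup>+x. ?f (0 + (-1) * x) \<partial>lborel)"
    by (intro nn_integral_add) auto
  also have "(\<integral>\<^sup>+x. ?f (0 + (-1) * x) \<partial>lborel) = (\<integral>\<^sup>+x. ?f x \<partial>lborel)"
    using nn_integral_real_affine[of ?f "-1" 0] by simp
  finally show ?thesis by (simp add: mult_2)
qed

lemma one_plus_sq_bound:
  fixes u p :: real assumes "p \<ge> 0"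
  shows "(1 + u^2) powr (-p) \<le> 2 powr p * (1 + \<bar>u\<bar>) powr (-2*p)"
proof -
  have e: "2 * (1+u^2) - (1+\<bar>u\<bar>)^2 = (\<bar>u\<bar> - 1)^2" by (simp add: power2_eq_square algebra_simps)
  have a: "(1+\<bar>u\<bar>)^2 \<le> 2 * (1+u^2)" using e zero_le_power2[of "\<bar>u\<bar> - 1"] by linarith
  have "(1+\<bar>u\<bar>) powr (2*p) = ((1+\<bar>u\<bar>) powr 2) powr p"
    by (rule powr_powr[symmetric])
  also have "\<dots> = ((1+\<bar>u\<bar>)^2) powr p" 
    by (subst powr_numeral) auto
  also have "\<dots> \<le> (2 * (1+u^2)) powr p" using a assms by (intro powr_mono2) auto
  also have "\<dots> = 2 powr p * (1+u^2) powr p" by (rule powr_mult)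
  finally have b: "(1+\<bar>u\<bar>) powr (2*p) \<le> 2 powr p * (1+u^2) powr p" .
  have nz: "1+u^2 > 0" "1+\<bar>u\<bar> > 0" by (smt (verit) zero_le_power2)+
  have pos: "(1+u^2) powr p > 0" "(1+\<bar>u\<bar>) powr (2*p) > 0" using nz by simp_all
  have "(1 + u^2) powr (-p) = 1 / (1+u^2) powr p" by (simp add: powr_minus divide_inverse)
  also have "\<dots> \<le> 2 powr p / (1 + \<bar>u\<bar>) powr (2*p)"
    using b pos by (subst frac_le_eq) (auto intro!: divide_nonpos_pos)
  also have "\<dots> = 2 powr p * (1 + \<bar>u\<bar>) powr (-2*p)" by (simp add: powr_minus divide_inverse)
  finally show ?thesis .
qed

lemma sq_powr: "(d::real) > 0 \<Longrightarrow> (d^2) powr x = d powr (2*x)"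
proof -
  assume d: "d > 0"
  have "(d^2) powr x = (d powr 2) powr x" using d by (subst powr_numeral) auto
  also have "\<dots> = d powr (2*x)" by (rule powr_powr)
  finally show ?thesis .
qed

lemma bub_affine:
  fixes d a u p :: real assumes d: "d > 0"
  shows "(d^2 + (a + d*u - a)^2) powr (-p) = d powr (-2*p) * (1+u^2) powr (-p)"
proof -
  have "d^2 + (a + d*u - a)^2 = d^2 * (1+u^2)" by (simp add: algebra_simps power2_eq_square)
  then have "(d^2 + (a + d*u - a)^2) powr (-p) = (d^2) powr (-p) * (1+u^2) powr (-p)"
    by (simp add: powr_mult)
  also have "(d^2) powr (-p) = d powr (-2*p)" using sq_powr[OF d] by simp
  finally show ?thesis .
qed

lemma ennreal_combine: "0 \<le> a \<Longrightarrow> 0 \<le> b \<Longrightarrow> 0 \<le> c \<Longrightarrow>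
   ennreal a * (2 * (ennreal b * ennreal c)) = ennreal (a * (2 * (b * c)))"
  by (simp add: ennreal_mult mult_nonneg_nonneg mult_ac)

lemma bub1d:
  fixes d a p :: real assumes d: "d > 0" and p: "p > 1/2"
  shows "(\<integral>\<^sup>+t. ennreal ((d^2 + (t-a)^2) powr (-p)) \<partial>lborel)
          \<le> ennreal (2 * (2 powr p / (2*p-1)) * d powr (1-2*p))"
proof -
  let ?f = "\<lambda>t. ennreal ((d^2 + (t-a)^2) powr (-p))"
  let ?c = "d powr (-2*p) * 2 powr p"
  have "(\<integral>\<^sup>+t. ?f t \<partial>lborel) = ennreal d * (\<integral>\<^sup>+u. ?f (a + d*u) \<partial>lborel)"
    using nn_integral_real_affine[of ?f d a] d by simp
  also have "(\<integral>\<^sup>+u. ?f (a + d*u) \<partial>lborel) \<le> (\<integral>\<^sup>+u. ennreal ((\<lambda>v. ?c * (1+v) powr (-2*p)) \<bar>u\<bar>) \<partial>lborel)"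
  proof (intro nn_integral_mono ennreal_leI)
    fix u :: real
    have "(d^2 + (a + d*u - a)^2) powr (-p) = d powr (-2*p) * (1+u^2) powr (-p)" by (rule bub_affine[OF d])
    also have "\<dots> \<le> d powr (-2*p) * (2 powr p * (1 + \<bar>u\<bar>) powr (-2*p))"
      using one_plus_sq_bound[of p u] p by (intro mult_left_mono) auto
    finally show "(d^2 + (a + d*u - a)^2) powr (-p) \<le> ?c * (1 + \<bar>u\<bar>) powr (-2*p)" by (simp add: mult_ac)
  qed
  also have "\<dots> \<le> 2 * (\<integral>\<^sup>+u. ennreal (?c * (1+u) powr (-2*p)) * indicator {0..} u \<partial>lborel)"
    by (rule even_bound) measurable
  also have "(\<integral>\<^sup>+u. ennreal (?c * (1+u) powr (-2*p)) * indicator {0..} u \<partial>lborel)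
      = ennreal ?c * (\<integral>\<^sup>+u. ennreal ((1+u) powr (-(2*p))) * indicator {0..} u \<partial>lborel)"
    by (subst nn_integral_cmult[symmetric]) (auto simp: ennreal_mult mult_ac)
  also have "(\<integral>\<^sup>+u. ennreal ((1+u) powr (-(2*p))) * indicator {0..} u \<partial>lborel) = ennreal (1/(2*p-1))"
    using oneside_inf[of "2*p"] p by simp
  finally have "(\<integral>\<^sup>+t. ?f t \<partial>lborel) \<le> ennreal d * (2 * (ennreal ?c * ennreal (1/(2*p-1))))"
    by (simp add: mult_left_mono)
  also have "\<dots> = ennreal (d * (2 * (?c * (1/(2*p-1)))))"
    using d p by (intro ennreal_combine) auto
  also have "d * (2 * (?c * (1/(2*p-1)))) = 2 * (2 powr p / (2*p-1)) * (d powr 1 * d powr (-2*p))"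
    using d by simp
  also have "d powr 1 * d powr (-2*p) = d powr (1-2*p)" using powr_add[of d 1 "-2*p"] d by simp
  finally show ?thesis .
qed

lemma bub1d_cut:
  fixes d a p L :: real assumes d: "d > 0" "d \<le> 1" and p: "0 < p" "p < 1/2" and L: "L \<ge> 0"
  shows "(\<integral>\<^sup>+t. ennreal ((d^2 + (t-a)^2) powr (-p)) * indicator {a-L..a+L} t \<partial>lborel)
          \<le> ennreal (2 * (2 powr p / (1-2*p)) * (1+L) powr (1-2*p))"
proof -
  define f where "f = (\<lambda>t. ennreal ((d^2 + (t-a)^2) powr (-p)) * indicator {a-L..a+L} t)"
  define c where "c = d powr (-2*p) * 2 powr p"
  define M where "M = L/d"
  define h where "h = (\<lambda>v. c * (1+v) powr (-2*p) * indicator {..M} v)"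
  have c0: "c \<ge> 0" unfolding c_def by simp
  have M0: "M \<ge> 0" unfolding M_def using d L by simp
  have eq: "(\<integral>\<^sup>+t. f t \<partial>lborel) = ennreal d * (\<integral>\<^sup>+u. f (a + d*u) \<partial>lborel)"
    using nn_integral_real_affine[of f d a] d unfolding f_def by simp
  have m1: "(\<integral>\<^sup>+u. f (a + d*u) \<partial>lborel) \<le> (\<integral>\<^sup>+u. ennreal (h \<bar>u\<bar>) \<partial>lborel)"
  proof (intro nn_integral_mono)
    fix u :: real
    have ind: "indicator {a-L..a+L} (a + d*u) = (indicator {..M} \<bar>u\<bar> :: real)"
    proof -
      have "(a + d*u \<in> {a-L..a+L}) \<longleftrightarrow> (\<bar>d*u\<bar> \<le> L)" by auto
      also have "\<bar>d*u\<bar> = d * \<bar>u\<bar>" using d by (simp add: abs_mult)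
      also have "(d * \<bar>u\<bar> \<le> L) \<longleftrightarrow> (\<bar>u\<bar> \<le> M)" unfolding M_def using d by (simp add: pos_le_divide_eq mult.commute)
      finally show ?thesis by (simp add: indicator_def)
    qed
    have "(d^2 + (a + d*u - a)^2) powr (-p) = d powr (-2*p) * (1+u^2) powr (-p)" by (rule bub_affine[OF d(1)])
    also have "\<dots> \<le> d powr (-2*p) * (2 powr p * (1 + \<bar>u\<bar>) powr (-2*p))"
      using one_plus_sq_bound[of p u] p by (intro mult_left_mono) auto
    finally have "(d^2 + (a + d*u - a)^2) powr (-p) \<le> c * (1 + \<bar>u\<bar>) powr (-2*p)" unfolding c_def by (simp add: mult_ac)
    then have "(d^2 + (a + d*u - a)^2) powr (-p) * indicator {a-L..a+L} (a + d*u) \<le> h \<bar>u\<bar>"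
      unfolding ind h_def by (auto simp: indicator_def)
    then have "ennreal ((d^2 + (a + d*u - a)^2) powr (-p) * indicator {a-L..a+L} (a + d*u)) \<le> ennreal (h \<bar>u\<bar>)" 
      by (rule ennreal_leI)
    then show "f (a + d*u) \<le> ennreal (h \<bar>u\<bar>)"
      unfolding f_def by (simp add: mult.commute[of "ennreal _"] indicator_mult_ennreal mult.commute[of "indicator _ _ :: real"])
  qed
  have m2: "(\<integral>\<^sup>+u. ennreal (h \<bar>u\<bar>) \<partial>lborel) \<le> 2 * (\<integral>\<^sup>+u. ennreal (h u) * indicator {0..} u \<partial>lborel)"
    by (rule even_bound) (unfold h_def, measurable)
  have m3: "(\<integral>\<^sup>+u. ennreal (h u) * indicator {0..} u \<partial>lborel)
      = (\<integral>\<^sup>+u. ennreal c * (ennreal ((1+u) powr (-(2*p))) * indicator {0..M} u) \<partial>lborel)"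
    by (intro nn_integral_cong) (auto simp: h_def c0 ennreal_mult indicator_def)
  have m4: "(\<integral>\<^sup>+u. ennreal c * (ennreal ((1+u) powr (-(2*p))) * indicator {0..M} u) \<partial>lborel)
      = ennreal c * (\<integral>\<^sup>+u. ennreal ((1+u) powr (-(2*p))) * indicator {0..M} u \<partial>lborel)"
    by (rule nn_integral_cmult) measurable
  have m5: "(\<integral>\<^sup>+u. ennreal ((1+u) powr (-(2*p))) * indicator {0..M} u \<partial>lborel) = ennreal (((1+M) powr (1-2*p) - 1)/(1-2*p))"
    by (rule oneside_fin) (use p M0 in auto)
  have m6: "ennreal (((1+M) powr (1-2*p) - 1)/(1-2*p)) \<le> ennreal ((1+M) powr (1-2*p)/(1-2*p))"
    apply (rule ennreal_leI) apply (rule divide_right_mono) using p by auto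
  define B where "B = (1+M) powr (1-2*p)/(1-2*p)"
  have B0: "B \<ge> 0" unfolding B_def using p by simp
  have "(\<integral>\<^sup>+u. f (a + d*u) \<partial>lborel) \<le> 2 * (ennreal c * ennreal B)"
  proof -
    have K: "(\<integral>\<^sup>+u. ennreal (h u) * indicator {0..} u \<partial>lborel) \<le> ennreal c * ennreal B"
      unfolding m3 m4 m5 B_def by (rule mult_left_mono[OF m6]) simp
    show ?thesis using order_trans[OF m1 m2] mult_left_mono[OF K, of 2] by simp
  qed
  also have "2 * (ennreal c * ennreal B) = ennreal (2 * (c * B))"
    using c0 B0 by (simp add: ennreal_mult)
  finally have I: "(\<integral>\<^sup>+u. f (a + d*u) \<partial>lborel) \<le> ennreal (2 * (c * B))" .
  have "(\<integral>\<^sup>+t. f t \<partial>lborel) \<le> ennreal d * ennreal (2 * (c * B))"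
    unfolding eq using I by (rule mult_left_mono) simp
  also have "\<dots> = ennreal (d * (2 * (c * B)))" using d by (simp add: ennreal_mult')
  also have "d * (2 * (c * B)) = 2 * (2 powr p / (1-2*p)) * ((d powr 1 * d powr (-2*p)) * (1+M) powr (1-2*p))"
    unfolding B_def c_def using d by simp
  also have "d powr 1 * d powr (-2*p) = d powr (1-2*p)" using powr_add[of d 1 "-2*p"] d by simp
  also have "d powr (1-2*p) * (1+M) powr (1-2*p) = (d * (1+M)) powr (1-2*p)"
    using d M0 by (subst powr_mult) auto
  also have "d * (1+M) = d + L" unfolding M_def using d by (simp add: field_simps)
  also have "ennreal (2 * (2 powr p / (1-2*p)) * (d + L) powr (1-2*p)) \<le> ennreal (2 * (2 powr p / (1-2*p)) * (1 + L) powr (1-2*p))"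
    apply (rule ennreal_leI) apply (rule mult_left_mono) apply (rule powr_mono2) using d p L by auto
  finally show ?thesis unfolding f_def .
qed



definition bb :: "real \<Rightarrow> real^4 \<Rightarrow> real^4 \<Rightarrow> real" where
  "bb d c x = 2 * sqrt 2 * d / (d^2 + (norm (x - c))^2)"

lemma norm_sq_basis: "(norm (v::real^4))^2 = (\<Sum>b\<in>Basis. (v \<bullet> b)^2)"
  unfolding power2_norm_eq_inner by (subst euclidean_inner) (simp add: power2_eq_square)

lemma card_Basis4: "card (Basis :: (real^4) set) = 4"
  by simp

lemma prod4_bound:
  fixes v :: "real^4" and d e :: real
  assumes d: "d > 0" and s: "e \<ge> 0"
  shows "(d^2 + (norm v)^2) powr (- (4*e)) \<le> (\<Prod>b\<in>Basis. (d^2 + (v \<bullet> b)^2) powr (- e))"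
proof -
  have pos: "d^2 + (norm v)^2 > 0" using d by (simp add: add_pos_nonneg)
  have "(d^2 + (norm v)^2) powr (- (4*e)) = ((d^2 + (norm v)^2) powr (- e)) ^ 4"
    using powr_power[of "d^2 + (norm v)^2" "- e" 4] pos d by (simp add: mult.commute)
  also have "\<dots> = (\<Prod>b\<in>(Basis::(real^4) set). (d^2 + (norm v)^2) powr (- e))"
    by (simp add: card_Basis4)
  also have "\<dots> \<le> (\<Prod>b\<in>Basis. (d^2 + (v \<bullet> b)^2) powr (- e))"
  proof (rule prod_mono)
    fix b :: "real^4" assume b: "b \<in> Basis"
    have "(norm (v \<bullet> b))^2 \<le> (norm v)^2" by (rule power_mono[OF norm_nth_le[OF b]]) simp
    then have "(v \<bullet> b)^2 \<le> (norm v)^2" by simp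
    moreover have "d^2 + (v \<bullet> b)^2 > 0" using d by (simp add: add_pos_nonneg)
    ultimately show "0 \<le> (d^2 + (norm v)^2) powr (- e) \<and> (d^2 + (norm v)^2) powr (- e) \<le> (d^2 + (v \<bullet> b)^2) powr (- e)"
      using s by (auto intro!: powr_mono2')
  qed
  finally show ?thesis .
qed

lemma int4_prod:
  fixes h :: "real^4 \<Rightarrow> real \<Rightarrow> real" and B :: real
  assumes meas: "\<And>b. h b \<in> borel_measurable borel" and nn: "\<And>b t. 0 \<le> h b t"
    and bnd: "\<And>b. b \<in> Basis \<Longrightarrow> (\<integral>\<^sup>+t. ennreal (h b t) \<partial>lborel) \<le> ennreal B"
    and B: "B \<ge> 0"
  shows "(\<integral>\<^sup>+x. ennreal (\<Prod>b\<in>Basis. h b (x \<bullet> b)) \<partial>lborel) \<le> ennreal (B^4)"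
proof -
  have "(\<integral>\<^sup>+x. ennreal (\<Prod>b\<in>Basis. h b (x \<bullet> b)) \<partial>lborel)
      = (\<integral>\<^sup>+x. (\<Prod>b\<in>Basis. (\<lambda>b t. ennreal (h b t)) b (x \<bullet> b)) \<partial>lborel)"
    by (intro nn_integral_cong) (simp add: prod_ennreal nn)
  also have "\<dots> = (\<Prod>b\<in>Basis. (\<integral>\<^sup>+t. ennreal (h b t) \<partial>lborel))"
    by (rule nn_integral_lborel_prod) (use meas in auto)
  also have "\<dots> \<le> (\<Prod>b\<in>(Basis::(real^4) set). ennreal B)"
    by (rule prod_mono_ennreal) (rule bnd)
  also have "\<dots> = ennreal (B^4)" using B by (simp add: card_Basis4 ennreal_power)
  finally show ?thesis .
qed

definition Q :: "(real^4 \<Rightarrow> real) \<Rightarrow> ennreal" where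
  "Q f = (\<integral>\<^sup>+x. ennreal (\<bar>f x\<bar> powr (4/3)) \<partial>lborel)"

lemma bb_pos: "d > 0 \<Longrightarrow> bb d c x > 0"
  unfolding bb_def by (auto intro!: divide_pos_pos add_pos_nonneg)

lemma bb_le_far: "d > 0 \<Longrightarrow> r > 0 \<Longrightarrow> r \<le> (norm (x - c))^2 \<Longrightarrow> bb d c x \<le> 2 * sqrt 2 * d / r"
  unfolding bb_def by (rule divide_left_mono) (auto intro!: mult_pos_pos add_pos_nonneg simp: add_increasing)

lemma powr_quot:
  fixes A D e :: real assumes "A \<ge> 0" "D > 0"
  shows "(A / D) powr e = A powr e * D powr (- e)"
  using assms by (subst powr_divide) (simp_all add: powr_minus divide_inverse)

lemma Q_bb_sq:
  fixes d :: real and c :: "real^4" assumes d: "d > 0"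
  shows "Q (\<lambda>x. (bb d c x)^2) \<le> ennreal ((2* sqrt 2) powr (8/3) * (2 * (2 powr (2/3) / (2*(2/3)-1)))^4 * d powr (4/3))"
proof -
  define K where "K = 2 * (2 powr (2/3) / (2*(2/3)-1)) * d powr (1-2*(2/3))"
  define A where "A = (2* sqrt 2*d) powr (8/3)"
  have A0: "A \<ge> 0" unfolding A_def by simp
  have K0: "K \<ge> 0" unfolding K_def by simp
  have pw: "\<bar>(bb d c x)^2\<bar> powr (4/3) \<le> A * (\<Prod>b\<in>Basis. (d^2 + (x \<bullet> b - c \<bullet> b)^2) powr (- (2/3)))" for x
  proof -
    have D: "d^2 + (norm (x - c))^2 > 0" using d by (simp add: add_pos_nonneg)
    have "\<bar>(bb d c x)^2\<bar> powr (4/3) = (bb d c x) powr (2*(4/3))"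
      using sq_powr[OF bb_pos[OF d], of c x "4/3"] by simp
    also have "\<dots> = A * (d^2 + (norm (x - c))^2) powr (- (4*(2/3)))"
      unfolding bb_def A_def using powr_quot[of "2* sqrt 2*d" "d^2 + (norm (x - c))^2" "2*(4/3)"] D d
      by simp
    also have "\<dots> \<le> A * (\<Prod>b\<in>Basis. (d^2 + ((x-c) \<bullet> b)^2) powr (- (2/3)))"
      using prod4_bound[OF d, of "2/3" "x - c"] A0 by (intro mult_left_mono) auto
    finally show ?thesis by (simp add: inner_diff_left)
  qed
  have "Q (\<lambda>x. (bb d c x)^2) \<le> (\<integral>\<^sup>+x. ennreal A * ennreal (\<Prod>b\<in>Basis. (d^2 + (x \<bullet> b - c \<bullet> b)^2) powr (- (2/3))) \<partial>lborel)"
    unfolding Q_def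
    by (intro nn_integral_mono, subst ennreal_mult'[OF A0, symmetric], rule ennreal_leI[OF pw])
  also have "\<dots> = ennreal A * (\<integral>\<^sup>+x. ennreal (\<Prod>b\<in>Basis. (d^2 + (x \<bullet> b - c \<bullet> b)^2) powr (- (2/3))) \<partial>lborel)"
    by (rule nn_integral_cmult) measurable
  also have "(\<integral>\<^sup>+x. ennreal (\<Prod>b\<in>Basis. (d^2 + (x \<bullet> b - c \<bullet> b)^2) powr (- (2/3))) \<partial>lborel) \<le> ennreal (K^4)"
  proof (rule int4_prod[where h = "\<lambda>b t. (d^2 + (t - c \<bullet> b)^2) powr (- (2/3))"])
    fix b :: "real^4"
    show "(\<integral>\<^sup>+t. ennreal ((d^2 + (t - c \<bullet> b)^2) powr (- (2/3))) \<partial>lborel) \<le> ennreal K"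
      unfolding K_def using bub1d[OF d, of "2/3" "c \<bullet> b"] by simp
  qed (auto simp: K0)
  finally have "Q (\<lambda>x. (bb d c x)^2) \<le> ennreal A * ennreal (K^4)" by (simp add: mult_left_mono)
  also have "\<dots> = ennreal (A * K^4)" using A0 K0 by (simp add: ennreal_mult)
  also have "A * K^4 = (2* sqrt 2) powr (8/3) * (2 * (2 powr (2/3) / (2*(2/3)-1)))^4 * (d powr (8/3) * (d powr (1-2*(2/3)))^4)"
    unfolding A_def K_def using d by (simp add: powr_mult power_mult_distrib)
  also have "d powr (8/3) * (d powr (1-2*(2/3)))^4 = d powr (4/3)"
  proof -
    have "(d powr (1-2*(2/3)))^4 = d powr (of_nat 4 * (1-2*(2/3)))" using d by (subst powr_power) auto
    then have "d powr (8/3) * (d powr (1-2*(2/3)))^4 = d powr (8/3 + of_nat 4 * (1-2*(2/3)))"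
      by (simp only: powr_add)
    also have "8/3 + of_nat 4 * (1-2*(2/3)) = (4/3::real)" by simp
    finally show ?thesis .
  qed
  finally show ?thesis .
qed

lemma U_pos: "U x > 0" unfolding U_def by (auto intro!: divide_pos_pos add_pos_nonneg)

lemma U_le: "U x \<le> 2 * sqrt 2"
proof -
  have "2 * sqrt 2 / (1 + (norm x)^2) \<le> 2 * sqrt 2 / 1"
    by (rule divide_left_mono) (auto intro!: add_pos_nonneg)
  then show ?thesis unfolding U_def by simp
qed

lemma near_bound:
  fixes x c :: "real^4" assumes c: "norm c \<le> 1" and near: "(norm (x - c))^2 < (1 + (norm x)^2)/4"
  shows "norm (x - c) < 2"
proof (rule ccontr)
  assume "\<not> norm (x - c) < 2"
  then have m2: "norm (x - c) \<ge> 2" by simp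
  define m where "m = norm (x - c)"
  define n where "n = norm x"
  have "n \<le> norm c + m" unfolding m_def n_def using norm_triangle_ineq[of c "x - c"] by simp
  then have nm: "n \<le> 1 + m" using c by simp
  have "n^2 \<le> (1+m)^2" by (rule power_mono[OF nm]) (simp add: n_def)
  moreover have "(1+m)^2 = 1 + 2*m + m*m" by (simp add: power2_eq_square algebra_simps)
  moreover have "m*m \<ge> 2*m" using m2 unfolding m_def by (intro mult_right_mono) auto
  moreover have "4 * (m*m) < 1 + n^2" using near unfolding m_def n_def by (simp add: power2_eq_square)
  moreover have "m \<ge> 2" using m2 unfolding m_def .
  ultimately show False by linarith
qed

lemma Q_U2_bb:
  fixes d :: real and c :: "real^4" assumes d: "d > 0" "d \<le> 1" and c: "norm c \<le> 1"
  shows "Q (\<lambda>x. (U x)^2 * bb d c x) \<le> ennreal ((64 * 4 powr (4/3) * 4^4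
            + 8 powr (4/3) * (2 * sqrt 2) powr (4/3) * (2 * (2 powr (1/3) / (1-2*(1/3))) * (1+2) powr (1-2*(1/3)))^4) * d powr (4/3))"
proof -
  define CA where "CA = 64 * 4 powr (4/3) * d powr (4/3)"
  define CB where "CB = 8 powr (4/3) * (2 * sqrt 2) powr (4/3) * d powr (4/3)"
  define P1 where "P1 = (\<lambda>x::real^4. \<Prod>b\<in>Basis. (1^2 + (x \<bullet> b - 0)^2) powr (- 1))"
  define P2 where "P2 = (\<lambda>x::real^4. \<Prod>b\<in>Basis. (d^2 + (x \<bullet> b - c \<bullet> b)^2) powr (- (1/3)) * indicator {c \<bullet> b - 2..c \<bullet> b + 2} (x \<bullet> b))"
  have CA0: "CA \<ge> 0" and CB0: "CB \<ge> 0" unfolding CA_def CB_def by simp_all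
  have P10: "P1 x \<ge> 0" for x unfolding P1_def by (intro prod_nonneg) simp
  have P20: "P2 x \<ge> 0" for x unfolding P2_def by (intro prod_nonneg) simp
  have pw: "\<bar>(U x)^2 * bb d c x\<bar> powr (4/3) \<le> CA * P1 x + CB * P2 x" for x
  proof -
    have Ux: "U x > 0" by (rule U_pos)
    have bx: "bb d c x > 0" by (rule bb_pos[OF d(1)])
    have g0: "(U x)^2 * bb d c x \<ge> 0" using Ux bx by simp
    show ?thesis
    proof (cases "(norm (x - c))^2 \<ge> (1 + (norm x)^2)/4")
      case True
      have r: "(1 + (norm x)^2)/4 > 0" by (auto intro: add_pos_nonneg)
      have "bb d c x \<le> 2 * sqrt 2 * d / ((1 + (norm x)^2)/4)" by (rule bb_le_far[OF d(1) r True])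
      also have "\<dots> = 4 * d * U x" unfolding U_def by (simp add: field_simps)
      finally have bU: "bb d c x \<le> 4 * d * U x" .
      have "(U x)^2 * bb d c x \<le> (U x)^2 * (4 * d * U x)" using bU by (intro mult_left_mono) auto
      also have "\<dots> = (4 * d) * (U x)^3" by (simp add: power2_eq_square power3_eq_cube)
      finally have gA: "(U x)^2 * bb d c x \<le> (4 * d) * (U x)^3" .
      have "\<bar>(U x)^2 * bb d c x\<bar> powr (4/3) = ((U x)^2 * bb d c x) powr (4/3)" using g0 by simp
      also have "\<dots> \<le> ((4 * d) * (U x)^3) powr (4/3)" using gA g0 by (intro powr_mono2) auto
      also have "\<dots> = (4 * d) powr (4/3) * ((U x) powr 3) powr (4/3)" using Ux d by (simp add: powr_mult)
      also have "((U x) powr 3) powr (4/3) = (U x) powr 4" by (simp add: powr_powr)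
      also have "(U x) powr 4 = 64 * (1^2 + (norm x)^2) powr (- (4*1))"
      proof -
        have pos: "1 + (norm x)^2 > 0" by (auto intro: add_pos_nonneg)
        have "(U x) powr 4 = (U x)^4" using Ux by simp
        also have "\<dots> = (2 * sqrt 2)^4 / (1 + (norm x)^2)^4" unfolding U_def by (simp add: power_divide)
        also have "(2 * sqrt 2)^4 = (64::real)"
        proof -
          have "sqrt 2 ^ 4 = (4::real)" using power_mult[of "sqrt 2" 2 2] by simp
          then show ?thesis by (simp add: power_mult_distrib)
        qed
        also have "(1 + (norm x)^2)^4 = (1 + (norm x)^2) powr 4" using pos by simp
        finally show ?thesis by (simp add: powr_minus divide_inverse)
      qed
      also have "(4 * d) powr (4/3) * (64 * (1^2 + (norm x)^2) powr (- (4*1))) \<le> (4 * d) powr (4/3) * (64 * P1 x)"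
        unfolding P1_def using prod4_bound[of 1 1 x] by (intro mult_left_mono) auto
      also have "\<dots> = CA * P1 x" unfolding CA_def using d by (simp add: powr_mult)
      finally show ?thesis using CB0 P20 by (simp add: add_increasing2)
    next
      case False
      then have near: "(norm (x - c))^2 < (1 + (norm x)^2)/4" by simp
      have m2: "norm (x - c) < 2" by (rule near_bound[OF c near])
      have ind: "indicator {c \<bullet> b - 2..c \<bullet> b + 2} (x \<bullet> b) = (1::real)" if b: "b \<in> Basis" for b
      proof -
        have "\<bar>(x - c) \<bullet> b\<bar> \<le> norm (x - c)" using norm_nth_le[OF b] by simp
        then have "\<bar>x \<bullet> b - c \<bullet> b\<bar> \<le> 2" using m2 by (simp add: inner_diff_left)
        then show ?thesis by (auto simp: indicator_def abs_le_iff)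
      qed
      have P2e: "P2 x = (\<Prod>b\<in>Basis. (d^2 + ((x - c) \<bullet> b)^2) powr (- (1/3)))"
        unfolding P2_def by (intro prod.cong refl) (simp add: ind inner_diff_left)
      have U8: "(U x)^2 \<le> 8"
      proof -
        have "(U x)^2 \<le> (2 * sqrt 2)^2" by (rule power_mono[OF U_le]) (use Ux in simp)
        then show ?thesis by (simp add: power_mult_distrib)
      qed
      have gB: "(U x)^2 * bb d c x \<le> 8 * bb d c x" using U8 bx by (intro mult_right_mono) auto
      have D: "d^2 + (norm (x - c))^2 > 0" using d by (simp add: add_pos_nonneg)
      have "\<bar>(U x)^2 * bb d c x\<bar> powr (4/3) = ((U x)^2 * bb d c x) powr (4/3)" using g0 by simp
      also have "\<dots> \<le> (8 * bb d c x) powr (4/3)" using gB g0 by (intro powr_mono2) auto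
      also have "\<dots> = 8 powr (4/3) * (bb d c x) powr (4/3)" by (simp add: powr_mult)
      also have "(bb d c x) powr (4/3) = (2 * sqrt 2 * d) powr (4/3) * (d^2 + (norm (x - c))^2) powr (- (4*(1/3)))"
        unfolding bb_def using powr_quot[of "2 * sqrt 2 * d" "d^2 + (norm (x - c))^2" "4/3"] D d by simp
      also have "8 powr (4/3) * ((2 * sqrt 2 * d) powr (4/3) * (d^2 + (norm (x - c))^2) powr (- (4*(1/3))))
          \<le> 8 powr (4/3) * ((2 * sqrt 2 * d) powr (4/3) * P2 x)"
        unfolding P2e using prod4_bound[OF d(1), of "1/3" "x - c"] by (intro mult_left_mono) auto
      also have "\<dots> = CB * P2 x" unfolding CB_def using d by (simp add: powr_mult)
      finally show ?thesis using CA0 P10 by (simp add: add_increasing)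
    qed
  qed
  have "Q (\<lambda>x. (U x)^2 * bb d c x) \<le> (\<integral>\<^sup>+x. ennreal CA * ennreal (P1 x) + ennreal CB * ennreal (P2 x) \<partial>lborel)"
    unfolding Q_def
  proof (intro nn_integral_mono)
    fix x :: "real^4"
    have "ennreal (\<bar>(U x)^2 * bb d c x\<bar> powr (4/3)) \<le> ennreal (CA * P1 x + CB * P2 x)" by (rule ennreal_leI[OF pw])
    also have "\<dots> = ennreal CA * ennreal (P1 x) + ennreal CB * ennreal (P2 x)"
      using CA0 CB0 P10[of x] P20[of x] by (subst ennreal_plus) (auto simp: ennreal_mult)
    finally show "ennreal (\<bar>(U x)^2 * bb d c x\<bar> powr (4/3)) \<le> ennreal CA * ennreal (P1 x) + ennreal CB * ennreal (P2 x)" .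
  qed
  also have "\<dots> = ennreal CA * (\<integral>\<^sup>+x. ennreal (P1 x) \<partial>lborel) + ennreal CB * (\<integral>\<^sup>+x. ennreal (P2 x) \<partial>lborel)"
    unfolding P1_def P2_def by (subst nn_integral_add) (auto simp: nn_integral_cmult)
  finally have Q1: "Q (\<lambda>x. (U x)^2 * bb d c x) \<le> ennreal CA * (\<integral>\<^sup>+x. ennreal (P1 x) \<partial>lborel) + ennreal CB * (\<integral>\<^sup>+x. ennreal (P2 x) \<partial>lborel)" .
  define K :: real where "K = 2 * (2 powr (1/3) / (1-2*(1/3))) * (1+2) powr (1-2*(1/3))"
  have K0: "K \<ge> 0" unfolding K_def by simp
  have I1: "(\<integral>\<^sup>+x. ennreal (P1 x) \<partial>lborel) \<le> ennreal (4^4)"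
    unfolding P1_def
  proof (rule int4_prod[where h = "\<lambda>b t. (1^2 + (t - 0)^2) powr (- 1)"])
    fix b :: "real^4"
    show "(\<integral>\<^sup>+t. ennreal ((1^2 + (t - 0)^2) powr (- 1)) \<partial>lborel) \<le> ennreal 4"
      using bub1d[of 1 1 0] by simp
  qed auto
  have I2: "(\<integral>\<^sup>+x. ennreal (P2 x) \<partial>lborel) \<le> ennreal (K^4)"
    unfolding P2_def
  proof (rule int4_prod[where h = "\<lambda>b t. (d^2 + (t - c \<bullet> b)^2) powr (- (1/3)) * indicator {c \<bullet> b - 2..c \<bullet> b + 2} t"])
    fix b :: "real^4"
    show "(\<integral>\<^sup>+t. ennreal ((d^2 + (t - c \<bullet> b)^2) powr (- (1/3)) * indicator {c \<bullet> b - 2..c \<bullet> b + 2} t) \<partial>lborel)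
       \<le> ennreal K" unfolding K_def
      using bub1d_cut[OF d, of "1/3" 2 "c \<bullet> b"] by (simp add: mult.commute[of "ennreal _"] indicator_mult_ennreal mult.commute[of "indicator _ _ :: real"])
  qed (auto simp: K0)
  have "Q (\<lambda>x. (U x)^2 * bb d c x) \<le> ennreal CA * ennreal (4^4) + ennreal CB * ennreal (K^4)"
    using Q1 add_mono[OF mult_left_mono[OF I1] mult_left_mono[OF I2]] by (meson order_trans zero_le)
  also have "\<dots> = ennreal (CA * 4^4 + CB * K^4)" using CA0 CB0 K0 by (subst ennreal_plus) (auto simp: ennreal_mult)
  also have "CA * 4^4 + CB * K^4 = (64 * 4 powr (4/3) * 4^4 + 8 powr (4/3) * (2 * sqrt 2) powr (4/3) * K^4) * d powr (4/3)"
    unfolding CA_def CB_def by (simp add: algebra_simps)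
  finally show ?thesis unfolding K_def .
qed



lemma Ubub_bb: "d > 0 \<Longrightarrow> Ubub d c x = bb d c x"
proof -
  assume d: "d > 0"
  have n: "norm ((1/d) *\<^sub>R (x - c)) = norm (x - c) / d" using d by simp
  have D: "d^2 + (norm (x - c))^2 > 0" using d by (simp add: add_pos_nonneg)
  show ?thesis unfolding Ubub_def U_def bb_def n using d D
    by (simp add: field_simps power2_eq_square)
qed

lemma norm_sq_vec: "(norm (v::real^4))^2 = (\<Sum>i\<in>UNIV. (v$i)^2)"
  unfolding power2_norm_eq_inner inner_vec_def by (simp add: power2_eq_square)

lemma norm_shift_sq:
  fixes v :: "real^4"
  shows "(norm (v + t *\<^sub>R axis i 1))^2 = (norm v)^2 + 2 * t * v$i + t^2"
proof -
  have "(norm (v + t *\<^sub>R axis i 1))^2 = (v + t *\<^sub>R axis i 1) \<bullet> (v + t *\<^sub>R axis i 1)"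
    by (simp add: power2_norm_eq_inner)
  also have "\<dots> = v \<bullet> v + 2 * t * (v \<bullet> axis i 1) + t^2 * (axis i 1 \<bullet> axis i (1::real))"
    by (simp add: inner_add_left inner_add_right inner_commute power2_eq_square algebra_simps)
  finally show ?thesis by (simp add: inner_axis power2_norm_eq_inner)
qed

definition pd1 :: "real \<Rightarrow> real^4 \<Rightarrow> 4 \<Rightarrow> real^4 \<Rightarrow> real" where
  "pd1 d c i y = - 4 * sqrt 2 * d * (y - c)$i / (d^2 + (norm (y - c))^2)^2"

lemma deriv1:
  assumes d: "d > 0"
  shows "((\<lambda>t. bb d c (y + t *\<^sub>R axis i 1)) has_real_derivative pd1 d c i y) (at 0)"
proof -
  define N where "N = (norm (y - c))^2"
  define w where "w = (y - c)$i"
  have D: "d^2 + N > 0" unfolding N_def using d by (simp add: add_pos_nonneg)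
  have f: "(\<lambda>t. bb d c (y + t *\<^sub>R axis i 1)) = (\<lambda>t. 2 * sqrt 2 * d / (d^2 + (N + 2 * t * w + t^2)))"
  proof
    fix t
    have "y + t *\<^sub>R axis i 1 - c = (y - c) + t *\<^sub>R axis i 1" by simp
    then show "bb d c (y + t *\<^sub>R axis i 1) = 2 * sqrt 2 * d / (d^2 + (N + 2 * t * w + t^2))"
      unfolding bb_def N_def w_def by (simp only: norm_shift_sq)
  qed
  have "((\<lambda>t. 2 * sqrt 2 * d / (d^2 + (N + 2 * t * w + t^2))) has_real_derivative
        - (2 * sqrt 2 * d * (2 * w)) / (d^2 + N)^2) (at 0)"
    using D by (auto intro!: derivative_eq_intros simp: power2_eq_square)
  moreover have "- (2 * sqrt 2 * d * (2 * w)) / (d^2 + N)^2 = pd1 d c i y"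
    unfolding pd1_def N_def w_def by simp
  ultimately show ?thesis unfolding f by simp
qed

definition pd2 :: "real \<Rightarrow> real^4 \<Rightarrow> 4 \<Rightarrow> real^4 \<Rightarrow> real" where
  "pd2 d c i y = - 4 * sqrt 2 * d * ((d^2 + (norm (y - c))^2) - 4 * ((y - c)$i)^2) / (d^2 + (norm (y - c))^2)^3"

lemma deriv2:
  assumes d: "d > 0"
  shows "((\<lambda>t. pd1 d c i (y + t *\<^sub>R axis i 1)) has_real_derivative pd2 d c i y) (at 0)"
proof -
  define N where "N = (norm (y - c))^2"
  define w where "w = (y - c)$i"
  have D: "d^2 + N > 0" unfolding N_def using d by (simp add: add_pos_nonneg)
  have f: "(\<lambda>t. pd1 d c i (y + t *\<^sub>R axis i 1)) = (\<lambda>t. - 4 * sqrt 2 * d * (w + t) / (d^2 + (N + 2 * t * w + t^2))^2)"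
  proof
    fix t
    have e: "y + t *\<^sub>R axis i 1 - c = (y - c) + t *\<^sub>R axis i 1" by simp
    have "(y + t *\<^sub>R axis i 1 - c)$i = w + t" unfolding e w_def by (simp add: axis_def)
    then show "pd1 d c i (y + t *\<^sub>R axis i 1) = - 4 * sqrt 2 * d * (w + t) / (d^2 + (N + 2 * t * w + t^2))^2"
      unfolding pd1_def N_def w_def e by (simp only: norm_shift_sq)
  qed
  have "((\<lambda>t. - 4 * sqrt 2 * d * (w + t) / (d^2 + (N + 2 * t * w + t^2))^2) has_real_derivative
        (- 4 * sqrt 2 * d * 1 * (d^2 + N)^2 - (- 4 * sqrt 2 * d * w) * (2 * (d^2 + N) * (2 * w))) / ((d^2 + N)^2)^2) (at 0)"
    using D apply (auto intro!: derivative_eq_intros simp: power2_eq_square)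
    by (simp add: divide_simps)
  moreover have "(- 4 * sqrt 2 * d * 1 * (d^2 + N)^2 - (- 4 * sqrt 2 * d * w) * (2 * (d^2 + N) * (2 * w))) / ((d^2 + N)^2)^2
      = pd2 d c i y"
  proof -
    define E where "E = d^2 + N"
    have E0: "E \<noteq> 0" using D unfolding E_def by simp
    have num: "- 4 * sqrt 2 * d * 1 * E^2 - (- 4 * sqrt 2 * d * w) * (2 * E * (2 * w)) = E * (- 4 * sqrt 2 * d * (E - 4 * w^2))"
      by (simp add: algebra_simps power2_eq_square)
    have den: "(E^2)^2 = E * E^3" by (simp add: power2_eq_square power3_eq_cube)
    have "(- 4 * sqrt 2 * d * 1 * E^2 - (- 4 * sqrt 2 * d * w) * (2 * E * (2 * w))) / (E^2)^2
        = (- 4 * sqrt 2 * d * (E - 4 * w^2)) / E^3"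
      unfolding num den using E0 by simp
    then show ?thesis unfolding pd2_def E_def N_def w_def by simp
  qed
  ultimately show ?thesis unfolding f by simp
qed

lemma sum_pd2:
  assumes d: "d > 0"
  shows "(\<Sum>i\<in>UNIV. pd2 d c i x) = - ((bb d c x)^3)"
proof -
  define N where "N = (norm (x - c))^2"
  define E where "E = d^2 + N"
  have E0: "E > 0" unfolding E_def N_def using d by (simp add: add_pos_nonneg)
  have "(\<Sum>i\<in>UNIV. pd2 d c i x) = (\<Sum>i\<in>UNIV. (- 4 * sqrt 2 * d) * (E - 4 * ((x - c)$i)^2) / E^3)"
    unfolding pd2_def E_def N_def by (simp add: mult.assoc)
  also have "\<dots> = (- 4 * sqrt 2 * d) * (\<Sum>i\<in>UNIV. (E - 4 * ((x - c)$i)^2)) / E^3"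
    by (simp add: sum_divide_distrib sum_distrib_left sum_negf)
  also have "(\<Sum>i\<in>(UNIV::4 set). (E - 4 * ((x - c)$i)^2)) = 4 * E - 4 * N"
    unfolding N_def norm_sq_vec by (simp add: sum_subtractf sum_distrib_left[symmetric])
  also have "4 * E - 4 * N = 4 * d^2" unfolding E_def by simp
  finally have L: "(\<Sum>i\<in>UNIV. pd2 d c i x) = - 16 * sqrt 2 * d^3 / E^3"
    by (simp add: power2_eq_square power3_eq_cube)
  have s3: "sqrt 2 ^ 3 = 2 * sqrt (2::real)" by (simp add: power3_eq_cube)
  have "(bb d c x)^3 = (2 * sqrt 2 * d)^3 / E^3" unfolding bb_def E_def N_def by (simp add: power_divide)
  also have "(2 * sqrt 2 * d)^3 = 16 * sqrt 2 * d^3" by (simp add: power_mult_distrib s3)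
  finally show ?thesis using L by simp
qed

lemma lap_sum:
  fixes cs :: "nat \<Rightarrow> real^4" and L :: "nat set"
  assumes d: "d > 0"
  shows "laplacian (\<lambda>x. \<Sum>l\<in>L. bb d (cs l) x) x = - (\<Sum>l\<in>L. ((bb d (cs l) x)^3))"
proof -
  have p1: "partial i (\<lambda>x. \<Sum>l\<in>L. bb d (cs l) x) = (\<lambda>y. \<Sum>l\<in>L. pd1 d (cs l) i y)" for i
  proof
    fix y
    have "((\<lambda>t. \<Sum>l\<in>L. bb d (cs l) (y + t *\<^sub>R axis i 1)) has_real_derivative (\<Sum>l\<in>L. pd1 d (cs l) i y)) (at 0)"
      by (rule DERIV_sum) (rule deriv1[OF d])
    then show "partial i (\<lambda>x. \<Sum>l\<in>L. bb d (cs l) x) y = (\<Sum>l\<in>L. pd1 d (cs l) i y)"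
      unfolding partial_def by (rule DERIV_imp_deriv)
  qed
  have p2: "partial i (partial i (\<lambda>x. \<Sum>l\<in>L. bb d (cs l) x)) x = (\<Sum>l\<in>L. pd2 d (cs l) i x)" for i
  proof -
    have "((\<lambda>t. \<Sum>l\<in>L. pd1 d (cs l) i (x + t *\<^sub>R axis i 1)) has_real_derivative (\<Sum>l\<in>L. pd2 d (cs l) i x)) (at 0)"
      by (rule DERIV_sum) (rule deriv2[OF d])
    then show ?thesis unfolding p1 partial_def by (rule DERIV_imp_deriv)
  qed
  have "laplacian (\<lambda>x. \<Sum>l\<in>L. bb d (cs l) x) x = (\<Sum>i\<in>UNIV. \<Sum>l\<in>L. pd2 d (cs l) i x)"
    unfolding laplacian_def p2 ..
  also have "\<dots> = (\<Sum>l\<in>L. \<Sum>i\<in>UNIV. pd2 d (cs l) i x)" by (rule sum.swap)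
  also have "\<dots> = (\<Sum>l\<in>L. - ((bb d (cs l) x)^3))" using sum_pd2[OF d] by simp
  finally show ?thesis by (simp add: sum_negf)
qed



lemma vec4_nth:
  "(vector [a,b,c,d] :: real^4) $ 1 = a" "(vector [a,b,c,d] :: real^4) $ 2 = b"
  "(vector [a,b,c,d] :: real^4) $ 3 = c" "(vector [a,b,c,d] :: real^4) $ 4 = d"
  by (simp_all add: vector_def)

lemma vec4_eq: "(v::real^4) = w \<longleftrightarrow> v$1 = w$1 \<and> v$2 = w$2 \<and> v$3 = w$3 \<and> v$4 = w$4"
  by (simp add: vec_eq_iff forall_4)

lemma rotT_nth:
  "(rotT t x) $ 1 = x$1 * cos t - x$2 * sin t" "(rotT t x) $ 2 = x$1 * sin t + x$2 * cos t"
  "(rotT t x) $ 3 = x$3 * cos t + x$4 * sin t" "(rotT t x) $ 4 = - x$3 * sin t + x$4 * cos t"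
  by (simp_all add: rotT_def vec4_nth)

lemma rotT_diff: "rotT t (x - y) = rotT t x - rotT t y"
  by (simp add: vec4_eq rotT_nth algebra_simps)

lemma rotT_scale: "rotT t (a *\<^sub>R x) = a *\<^sub>R rotT t x"
  by (simp add: vec4_eq rotT_nth algebra_simps)

lemma rot_alg:
 fixes a b c s :: real
 shows "(a * c + b * s) * c - (- a * s + b * c) * s = a * (s^2 + c^2)"
  and "(a * c + b * s) * s + (- a * s + b * c) * c = b * (s^2 + c^2)"
  and "(a * c - b * s) * c + (a * s + b * c) * s = a * (s^2 + c^2)"
  and "- (a * c - b * s) * s + (a * s + b * c) * c = b * (s^2 + c^2)"
  and "(a * c - b * s)^2 + (a * s + b * c)^2 = (a^2 + b^2) * (s^2 + c^2)"
  and "(a * c + b * s)^2 + (- a * s + b * c)^2 = (a^2 + b^2) * (s^2 + c^2)"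
 by (simp_all add: algebra_simps power2_eq_square)

lemma rotT_inv: "rotT t (rotT (- t) y) = y"
  using rot_alg[of "y$1" "cos t" "y$2" "sin t"] rot_alg[of "y$3" "cos t" "y$4" "sin t"]
  by (simp add: vec4_eq rotT_nth)

lemma norm_rotT: "norm (rotT t x) = norm x"
proof -
  have "(norm (rotT t x))^2 = (norm x)^2"
    using rot_alg[of "x$1" "cos t" "x$2" "sin t"] rot_alg[of "x$3" "cos t" "x$4" "sin t"]
    unfolding norm_sq_vec sum_4 rotT_nth by simp
  then show ?thesis by (simp add: power2_eq_iff_nonneg)
qed

lemma norm_rotT_diff: "norm (rotT t x - rotT t y) = norm (x - y)"
  by (metis rotT_diff norm_rotT)

definition phi :: "nat \<Rightarrow> nat \<Rightarrow> real" where "phi k l = 2 * pi * (real l - 1) / real k"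
definition Pk :: "nat \<Rightarrow> nat \<Rightarrow> real^4" where
  "Pk k l = vector [cos (phi k l), sin (phi k l), cos (phi k l), sin (phi k l)]"

lemma xi_eq: "xi_tilde k d l = (sqrt (1 - d^2) / sqrt 2) *\<^sub>R Pk k l"
  by (simp add: vec4_eq xi_tilde_def Pk_def phi_def Let_def vec4_nth)

lemma norm_Pk: "norm (Pk k l) = sqrt 2"
proof -
  have "(norm (Pk k l))^2 = 2"
    unfolding norm_sq_vec sum_4 Pk_def vec4_nth by simp
  then show ?thesis by (metis norm_ge_zero real_sqrt_unique)
qed

lemma norm_xi: "0 \<le> d \<Longrightarrow> d \<le> 1 \<Longrightarrow> norm (xi_tilde k d l) \<le> 1"
proof -
  assume d: "0 \<le> d" "d \<le> 1"
  have "d^2 \<le> 1" using d by (simp add: power_le_one)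
  then have r: "0 \<le> 1 - d^2" "1 - d^2 \<le> 1" using d by auto
  have "norm (xi_tilde k d l) = sqrt (1 - d^2)" unfolding xi_eq using r by simp (simp add: norm_Pk)
  also have "\<dots> \<le> 1" using r by simp
  finally show ?thesis .
qed

definition theta :: "nat \<Rightarrow> nat \<Rightarrow> real" where "theta q r = (real r - 1) * pi / real q"
definition eta :: "nat \<Rightarrow> nat \<Rightarrow> real \<Rightarrow> nat \<Rightarrow> nat \<Rightarrow> real^4" where
  "eta q k d r l = rotT (- theta q r) (xi_tilde k d l)"

lemma V_tilde_bb: "d > 0 \<Longrightarrow> V_tilde k d x = (\<Sum>l=1..k. bb d (xi_tilde k d l) x)"
  unfolding V_tilde_def by (simp add: Ubub_bb)

lemma V_tilde_fun: "d > 0 \<Longrightarrow> V_tilde k d = (\<lambda>x. \<Sum>l=1..k. bb d (xi_tilde k d l) x)"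
  using V_tilde_bb by blast

lemma bb_rot: "bb d (rotT t c) (rotT t x) = bb d c x"
  unfolding bb_def using norm_rotT_diff by simp

lemma V_r_bb: "d > 0 \<Longrightarrow> V_r q k d r x = (\<Sum>l=1..k. bb d (eta q k d r l) x)"
proof -
  assume d: "d > 0"
  have "V_r q k d r x = (\<Sum>l=1..k. bb d (xi_tilde k d l) (rotT (theta q r) x))"
    unfolding V_r_def theta_def using V_tilde_bb[OF d] by simp
  also have "\<dots> = (\<Sum>l=1..k. bb d (eta q k d r l) x)"
  proof (rule sum.cong[OF refl])
    fix l
    have "xi_tilde k d l = rotT (theta q r) (eta q k d r l)"
      unfolding eta_def using rotT_inv[of "theta q r"] by simp
    then show "bb d (xi_tilde k d l) (rotT (theta q r) x) = bb d (eta q k d r l) x"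
      using bb_rot by simp
  qed
  finally show ?thesis .
qed

lemma norm_eta: "0 \<le> d \<Longrightarrow> d \<le> 1 \<Longrightarrow> norm (eta q k d r l) \<le> 1"
  unfolding eta_def norm_rotT by (rule norm_xi)

lemma Pk_inj:
  assumes a: "a \<in> {1..k}" and b: "b \<in> {1..k}" and eq: "Pk k a = Pk k b"
  shows "a = b"
proof -
  have k: "real k > 0" using a by simp
  have "sin (phi k a) = sin (phi k b) \<and> cos (phi k a) = cos (phi k b)"
    using eq unfolding vec4_eq Pk_def vec4_nth by simp
  then obtain n :: int where n: "phi k a = phi k b + 2 * pi * n" using sin_cos_eq_iff by blast
  then have "2 * pi * (real a - real b) = 2 * pi * (real_of_int n * real k)"
    unfolding phi_def using k by (simp add: field_simps)
  then have e: "real a - real b = real_of_int n * real k" by simp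
  have "\<bar>real a - real b\<bar> < real k" using a b by auto
  then have "\<bar>real_of_int n\<bar> * real k < 1 * real k" unfolding e by (simp add: abs_mult)
  then have "\<bar>real_of_int n\<bar> < 1" using k by (simp only: mult_less_cancel_right)
  then have "n = 0" by linarith
  then show ?thesis using e by simp
qed

lemma rot_ne:
  assumes r: "r \<in> {2..q}"
  shows "rotT (theta q r) (Pk k a) \<noteq> Pk k l"
proof
  assume eq: "rotT (theta q r) (Pk k a) = Pk k l"
  define t where "t = theta q r"
  define u where "u = phi k a"
  define v where "v = phi k l"
  have c: "(rotT t (Pk k a))$1 = Pk k l $1" "(rotT t (Pk k a))$2 = Pk k l $2"
     "(rotT t (Pk k a))$3 = Pk k l $3" "(rotT t (Pk k a))$4 = Pk k l $4" using eq unfolding t_def by simp_all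
  have "sin (u + t) = sin v \<and> cos (u + t) = cos v"
    using c(1,2) unfolding rotT_nth Pk_def vec4_nth u_def v_def by (simp add: sin_add cos_add algebra_simps)
  then obtain n1 :: int where n1: "u + t = v + 2 * pi * n1" using sin_cos_eq_iff by blast
  have "sin (u - t) = sin v \<and> cos (u - t) = cos v"
    using c(3,4) unfolding rotT_nth Pk_def vec4_nth u_def v_def by (simp add: sin_diff cos_diff algebra_simps)
  then obtain n2 :: int where n2: "u - t = v + 2 * pi * n2" using sin_cos_eq_iff by blast
  have "2 * t = 2 * pi * (n1 - n2)" using n1 n2 by (simp add: algebra_simps)
  then have "t = pi * (n1 - n2)" by simp
  have q: "real q > 0" using r by simp
  then have "pi * (real r - 1) = pi * (real_of_int (n1 - n2) * real q)"
    using \<open>t = pi * (n1 - n2)\<close> unfolding t_def theta_def by (simp add: field_simps)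
  then have "real r - 1 = real_of_int (n1 - n2) * real q" by simp
  then have e: "(real r - 1) / real q = real_of_int (n1 - n2)" using q by (simp add: field_simps)
  have "0 < (real r - 1) / real q" using r q by (simp add: divide_pos_pos)
  moreover have "(real r - 1) / real q < 1" using r q by (simp add: divide_less_eq)
  ultimately have "0 < real_of_int (n1 - n2)" "real_of_int (n1 - n2) < 1" unfolding e by auto
  then have "0 < n1 - n2" "n1 - n2 < 1" by simp_all
  then show False by linarith
qed



lemma dmin_exists:
  "\<exists>m>0. (\<forall>a\<in>{1..k}. \<forall>b\<in>{1..k}. a \<noteq> b \<longrightarrow> m \<le> norm (Pk k a - Pk k b)) \<and>
         (\<forall>r\<in>{2..q}. \<forall>a\<in>{1..k}. \<forall>l\<in>{1..k}. m \<le> norm (rotT (theta q r) (Pk k a) - Pk k l))"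
proof -
  define S1 where "S1 = (\<lambda>(a,b). norm (Pk k a - Pk k b)) ` (({1..k}\<times>{1..k}) \<inter> {(a,b). a \<noteq> b})"
  define S2 where "S2 = (\<lambda>(r,a,l). norm (rotT (theta q r) (Pk k a) - Pk k l)) ` ({2..q}\<times>{1..k}\<times>{1..k})"
  define S where "S = insert 1 (S1 \<union> S2)"
  have fin: "finite S" unfolding S_def S1_def S2_def by auto
  have pos: "\<forall>e\<in>S. e > 0"
  proof
    fix e assume "e \<in> S"
    then consider "e = 1" | "e \<in> S1" | "e \<in> S2" unfolding S_def by auto
    then show "e > 0"
    proof cases
      case 2
      then obtain a b where ab: "a \<in> {1..k}" "b \<in> {1..k}" "a \<noteq> b" "e = norm (Pk k a - Pk k b)"
        unfolding S1_def by auto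
      then have "Pk k a \<noteq> Pk k b" using Pk_inj by blast
      then show ?thesis using ab by simp
    next
      case 3
      then obtain r a l where ral: "r \<in> {2..q}" "e = norm (rotT (theta q r) (Pk k a) - Pk k l)"
        unfolding S2_def by auto
      then show ?thesis using rot_ne[OF ral(1)] by simp
    qed simp
  qed
  define m where "m = Min S"
  have "m > 0" unfolding m_def using fin pos by (simp add: Min_gr_iff S_def)
  moreover have "\<forall>e\<in>S. m \<le> e" unfolding m_def using fin by simp
  moreover have "norm (Pk k a - Pk k b) \<in> S" if "a \<in> {1..k}" "b \<in> {1..k}" "a \<noteq> b" for a b
    unfolding S_def S1_def using that by (intro insertI2 UnI1 image_eqI[where x="(a,b)"]) auto
  moreover have "norm (rotT (theta q r) (Pk k a) - Pk k l) \<in> S" if "r \<in> {2..q}" "a \<in> {1..k}" "l \<in> {1..k}" for r a l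
    unfolding S_def S2_def using that by (intro insertI2 UnI2 image_eqI[where x="(r,a,l)"]) auto
  ultimately show ?thesis by (intro exI[of _ m]) blast
qed

lemma scale_half:
  fixes d :: real assumes "0 \<le> d" "d \<le> 1/2"
  shows "1/2 \<le> sqrt (1 - d^2) / sqrt 2"
proof -
  have "d^2 \<le> (1/2)^2" using assms by (intro power_mono) auto
  then have "1/4 \<le> (1 - d^2) / 2" by (simp add: power2_eq_square)
  then have "sqrt (1/4) \<le> sqrt ((1 - d^2) / 2)" by (rule real_sqrt_le_mono)
  moreover have "sqrt (1/4) = (1/2::real)" by (simp add: real_sqrt_divide)
  ultimately show ?thesis by (simp add: real_sqrt_divide)
qed

lemma sepA:
  assumes m: "\<forall>a\<in>{1..k}. \<forall>b\<in>{1..k}. a \<noteq> b \<longrightarrow> m \<le> norm (Pk k a - Pk k b)" and "m > 0"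
    and d: "0 \<le> d" "d \<le> 1/2" and ab: "a \<in> {1..k}" "b \<in> {1..k}" "a \<noteq> b"
  shows "m/2 \<le> norm (xi_tilde k d a - xi_tilde k d b)"
proof -
  define s where "s = sqrt (1 - d^2) / sqrt 2"
  have s: "1/2 \<le> s" unfolding s_def by (rule scale_half[OF d])
  have "norm (xi_tilde k d a - xi_tilde k d b) = s * norm (Pk k a - Pk k b)"
    unfolding xi_eq s_def[symmetric] using s by (simp flip: scaleR_diff_right)
  moreover have "m \<le> norm (Pk k a - Pk k b)" using m ab by blast
  moreover have "(1/2) * norm (Pk k a - Pk k b) \<le> s * norm (Pk k a - Pk k b)" using s by (intro mult_right_mono) auto
  ultimately show ?thesis by linarith
qed

lemma sepB:
  assumes m: "\<forall>r\<in>{2..q}. \<forall>a\<in>{1..k}. \<forall>l\<in>{1..k}. m \<le> norm (rotT (theta q r) (Pk k a) - Pk k l)" and "m > 0"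
    and d: "0 \<le> d" "d \<le> 1/2" and ral: "r \<in> {2..q}" "a \<in> {1..k}" "l \<in> {1..k}"
  shows "m/2 \<le> norm (xi_tilde k d a - eta q k d r l)"
proof -
  define s where "s = sqrt (1 - d^2) / sqrt 2"
  define T where "T = rotT (theta q r)"
  have s: "1/2 \<le> s" unfolding s_def by (rule scale_half[OF d])
  have Te: "T (eta q k d r l) = xi_tilde k d l" unfolding T_def eta_def by (rule rotT_inv)
  have "norm (xi_tilde k d a - eta q k d r l) = norm (T (xi_tilde k d a) - T (eta q k d r l))"
    unfolding T_def by (rule norm_rotT_diff[symmetric])
  also have "\<dots> = norm (s *\<^sub>R T (Pk k a) - s *\<^sub>R Pk k l)"
    unfolding Te unfolding xi_eq s_def[symmetric] T_def rotT_scale ..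
  also have "\<dots> = s * norm (T (Pk k a) - Pk k l)"
    using s by (simp flip: scaleR_diff_right)
  finally have e: "norm (xi_tilde k d a - eta q k d r l) = s * norm (T (Pk k a) - Pk k l)" .
  moreover have "m \<le> norm (T (Pk k a) - Pk k l)" using m ral unfolding T_def by blast
  moreover have "(1/2) * norm (T (Pk k a) - Pk k l) \<le> s * norm (T (Pk k a) - Pk k l)" using s by (intro mult_right_mono) auto
  ultimately show ?thesis by linarith
qed

lemma bb_pair:
  assumes d: "d > 0" and sg: "sg > 0" and sep: "sg \<le> norm (c1 - c2)"
  shows "bb d c1 x * bb d c2 x \<le> (8 * sqrt 2 * d / sg^2) * (bb d c1 x + bb d c2 x)"
proof -
  define K where "K = 8 * sqrt 2 * d / sg^2"
  have b1: "bb d c1 x > 0" and b2: "bb d c2 x > 0" using bb_pos[OF d] by auto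
  have tri: "norm (c1 - c2) \<le> norm (x - c1) + norm (x - c2)"
    by (metis norm_minus_commute norm_triangle_ineq4 diff_diff_eq2 add.commute norm_diff_triangle_ineq
              dist_norm dist_triangle2)
  have far: "bb d c x \<le> K" if "sg/2 \<le> norm (x - c)" for c
  proof -
    have "(sg/2)^2 \<le> (norm (x - c))^2" using that sg by (intro power_mono) auto
    then have "bb d c x \<le> 2 * sqrt 2 * d / (sg/2)^2" using sg by (intro bb_le_far[OF d]) auto
    also have "\<dots> = K" unfolding K_def by (simp add: power2_eq_square field_simps)
    finally show ?thesis .
  qed
  show ?thesis
  proof (cases "sg/2 \<le> norm (x - c1)")
    case True
    then have "bb d c1 x * bb d c2 x \<le> K * bb d c2 x" using far b2 by (intro mult_right_mono) auto
    also have "\<dots> \<le> K * (bb d c1 x + bb d c2 x)" using b1 d sg unfolding K_def by (intro mult_left_mono) auto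
    finally show ?thesis unfolding K_def .
  next
    case False
    then have "sg/2 \<le> norm (x - c2)" using tri sep by linarith
    then have "bb d c1 x * bb d c2 x \<le> bb d c1 x * K" using far b1 by (intro mult_left_mono) auto
    also have "\<dots> = K * bb d c1 x" by simp
    also have "\<dots> \<le> K * (bb d c1 x + bb d c2 x)" using b2 d sg unfolding K_def by (intro mult_left_mono) auto
    finally show ?thesis unfolding K_def .
  qed
qed



lemma sq_sum_le: "finite L \<Longrightarrow> (\<Sum>a\<in>L. u a)^2 \<le> real (card L) * (\<Sum>a\<in>L. (u a)^2)"
  using sum_squared_le_sum_of_squares[of u L] by (simp add: mult.commute)

lemma cubic_bound:
  fixes u :: "nat \<Rightarrow> real" and L :: "nat set" and e :: real
  assumes fin: "finite L" and e: "e \<ge> 0" and nn: "\<And>a. a \<in> L \<Longrightarrow> 0 \<le> u a"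
    and pair: "\<And>a b. a \<in> L \<Longrightarrow> b \<in> L \<Longrightarrow> a \<noteq> b \<Longrightarrow> u a * u b \<le> e * (u a + u b)"
  shows "0 \<le> (\<Sum>a\<in>L. u a)^3 - (\<Sum>a\<in>L. (u a)^3)"
    and "(\<Sum>a\<in>L. u a)^3 - (\<Sum>a\<in>L. (u a)^3) \<le> 4 * e * (real (card L))^2 * (\<Sum>a\<in>L. (u a)^2)"
proof -
  define S where "S = (\<Sum>a\<in>L. u a)"
  define k where "k = real (card L)"
  have S0: "S \<ge> 0" unfolding S_def using nn by (simp add: sum_nonneg)
  have uS: "u a \<le> S" if "a \<in> L" for a unfolding S_def using fin nn that by (intro member_le_sum) auto
  have rem: "S - u a = (\<Sum>b\<in>L-{a}. u b)" if "a \<in> L" for a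
    unfolding S_def using fin that by (simp add: sum_diff1)
  have step1: "u a * (S - u a) \<le> e * (k * u a + S)" if a: "a \<in> L" for a
  proof -
    have "u a * (S - u a) = (\<Sum>b\<in>L-{a}. u a * u b)" unfolding rem[OF a] by (simp add: sum_distrib_left)
    also have "\<dots> \<le> (\<Sum>b\<in>L-{a}. e * (u a + u b))" using pair a by (intro sum_mono) auto
    also have "\<dots> = e * (real (card (L - {a})) * u a + (\<Sum>b\<in>L-{a}. u b))"
      by (simp add: sum.distrib sum_distrib_left[symmetric])
    also have "\<dots> \<le> e * (k * u a + S)"
    proof -
      have "real (card (L - {a})) \<le> k" unfolding k_def using fin by (simp add: card_mono)
      then have "real (card (L - {a})) * u a \<le> k * u a" using nn[OF a] by (intro mult_right_mono) auto
      moreover have "(\<Sum>b\<in>L-{a}. u b) \<le> S" using rem[OF a] nn[OF a] by simp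
      ultimately show ?thesis using e by (intro mult_left_mono) auto
    qed
    finally show ?thesis .
  qed
  have decomp: "S^3 - (\<Sum>a\<in>L. (u a)^3) = (\<Sum>a\<in>L. u a * (S - u a) * (S + u a))"
  proof -
    have "(\<Sum>a\<in>L. u a * (S - u a) * (S + u a)) = (\<Sum>a\<in>L. u a * S^2 - (u a)^3)"
      by (intro sum.cong) (simp_all add: algebra_simps power2_eq_square power3_eq_cube)
    also have "\<dots> = S * S^2 - (\<Sum>a\<in>L. (u a)^3)"
      by (simp add: sum_subtractf sum_distrib_right[symmetric] S_def)
    finally show ?thesis by (simp add: power2_eq_square power3_eq_cube)
  qed
  show "0 \<le> (\<Sum>a\<in>L. u a)^3 - (\<Sum>a\<in>L. (u a)^3)"
    unfolding S_def[symmetric] decomp using nn uS S0 by (intro sum_nonneg) auto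
  have "S^3 - (\<Sum>a\<in>L. (u a)^3) \<le> (\<Sum>a\<in>L. e * (k * u a + S) * (2 * S))"
    unfolding decomp
  proof (intro sum_mono)
    fix a assume a: "a \<in> L"
    have h1: "0 \<le> u a * (S - u a)" using nn[OF a] uS[OF a] by simp
    have h2: "S + u a \<le> 2 * S" using uS[OF a] by simp
    have "u a * (S - u a) * (S + u a) \<le> u a * (S - u a) * (2 * S)" using h1 h2 by (intro mult_left_mono) auto
    also have "\<dots> \<le> e * (k * u a + S) * (2 * S)" using step1[OF a] S0 by (intro mult_right_mono) auto
    finally show "u a * (S - u a) * (S + u a) \<le> e * (k * u a + S) * (2 * S)" .
  qed
  also have "\<dots> = 2 * e * S * (k * S + k * S)"
    by (simp add: sum.distrib sum_distrib_left[symmetric] sum_distrib_right[symmetric] S_def[symmetric] k_def algebra_simps)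
  also have "\<dots> = 4 * e * k * S^2" by (simp add: power2_eq_square algebra_simps)
  also have "\<dots> \<le> 4 * e * k * (k * (\<Sum>a\<in>L. (u a)^2))"
    unfolding S_def k_def using sq_sum_le[OF fin, of u] e by (intro mult_left_mono) auto
  finally show "(\<Sum>a\<in>L. u a)^3 - (\<Sum>a\<in>L. (u a)^3) \<le> 4 * e * (real (card L))^2 * (\<Sum>a\<in>L. (u a)^2)"
    unfolding S_def k_def by (simp add: power2_eq_square algebra_simps)
qed

lemma alpha_bound:
  fixes u v :: "nat \<Rightarrow> real" and A B :: "nat set" and e :: real
  assumes fin: "finite A" "finite B" and e: "e \<ge> 0" and nnu: "\<And>a. a \<in> A \<Longrightarrow> 0 \<le> u a"
    and nnv: "\<And>a. a \<in> B \<Longrightarrow> 0 \<le> v a"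
    and pair: "\<And>a b. a \<in> A \<Longrightarrow> b \<in> B \<Longrightarrow> u a * v b \<le> e * (u a + v b)"
  shows "(\<Sum>a\<in>A. u a) * (\<Sum>b\<in>B. v b)^2 \<le>
          e * (real (card A) + real (card B)) * (real (card A) * (\<Sum>a\<in>A. (u a)^2) + real (card B) * (\<Sum>b\<in>B. (v b)^2))"
proof -
  define V where "V = (\<Sum>a\<in>A. u a)"
  define W where "W = (\<Sum>b\<in>B. v b)"
  define cA where "cA = real (card A)"
  define cB where "cB = real (card B)"
  have V0: "V \<ge> 0" unfolding V_def using nnu by (simp add: sum_nonneg)
  have W0: "W \<ge> 0" unfolding W_def using nnv by (simp add: sum_nonneg)
  have uW: "u a * W \<le> e * (cB * u a + W)" if a: "a \<in> A" for a
  proof -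
    have "u a * W = (\<Sum>b\<in>B. u a * v b)" unfolding W_def by (simp add: sum_distrib_left)
    also have "\<dots> \<le> (\<Sum>b\<in>B. e * (u a + v b))" using pair a by (intro sum_mono) auto
    also have "\<dots> = e * (cB * u a + W)" unfolding cB_def W_def
      by (simp add: sum.distrib sum_distrib_left[symmetric])
    finally show ?thesis .
  qed
  have VW: "V * W \<le> e * (cB * V + cA * W)"
  proof -
    have "V * W = (\<Sum>a\<in>A. u a * W)" unfolding V_def by (simp add: sum_distrib_right)
    also have "\<dots> \<le> (\<Sum>a\<in>A. e * (cB * u a + W))" using uW by (intro sum_mono) auto
    also have "\<dots> = e * (cB * V + cA * W)" unfolding cA_def V_def
      by (simp add: sum.distrib sum_distrib_left[symmetric] algebra_simps)
    finally show ?thesis .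
  qed
  have "V * W^2 = (V * W) * W" by (simp add: power2_eq_square)
  also have "\<dots> \<le> e * (cB * V + cA * W) * W" using VW W0 by (intro mult_right_mono) auto
  also have "\<dots> = e * (cB * (V * W) + cA * W^2)" by (simp add: algebra_simps power2_eq_square)
  also have "\<dots> \<le> e * (cB * ((V^2 + W^2)/2) + cA * W^2)"
  proof -
    have "V * W \<le> (V^2 + W^2)/2" using sum_squares_bound[of V W] by (simp add: power2_eq_square field_simps)
    then show ?thesis using e by (intro mult_left_mono add_right_mono mult_left_mono) (auto simp: cB_def)
  qed
  also have "\<dots> \<le> e * (cA + cB) * (V^2 + W^2)"
  proof -
    have "cB * ((V^2 + W^2)/2) + cA * W^2 \<le> (cA + cB) * (V^2 + W^2)"
      unfolding cA_def cB_def by (simp add: algebra_simps add_increasing mult_nonneg_nonneg)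
    then show ?thesis using e by (simp add: mult.assoc mult_left_mono)
  qed
  also have "\<dots> \<le> e * (cA + cB) * (cA * (\<Sum>a\<in>A. (u a)^2) + cB * (\<Sum>b\<in>B. (v b)^2))"
  proof -
    have "V^2 \<le> cA * (\<Sum>a\<in>A. (u a)^2)" unfolding V_def cA_def by (rule sq_sum_le[OF fin(1)])
    moreover have "W^2 \<le> cB * (\<Sum>b\<in>B. (v b)^2)" unfolding W_def cB_def by (rule sq_sum_le[OF fin(2)])
    ultimately show ?thesis using e by (intro mult_left_mono) (auto simp: cA_def cB_def)
  qed
  finally show ?thesis unfolding V_def W_def cA_def cB_def .
qed



lemma powr_sum_le:
  fixes g :: "'a \<Rightarrow> real" and p :: real
  assumes fin: "finite S" and nn: "\<And>j. j \<in> S \<Longrightarrow> 0 \<le> g j" and p: "p > 0"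
  shows "(\<Sum>j\<in>S. g j) powr p \<le> real (card S) powr p * (\<Sum>j\<in>S. g j powr p)"
proof (cases "S = {}")
  case True then show ?thesis by simp
next
  case False
  have "Max (g ` S) \<in> g ` S" using fin False by (intro Max_in) auto
  then obtain j0 where j0S: "j0 \<in> S" and eq: "g j0 = Max (g ` S)" by auto
  have j0: "j0 \<in> S" "\<And>j. j \<in> S \<Longrightarrow> g j \<le> g j0"
    using j0S unfolding eq using fin by (auto intro: Max_ge)
  have "(\<Sum>j\<in>S. g j) \<le> (\<Sum>j\<in>S. g j0)" using j0 by (intro sum_mono) auto
  also have "\<dots> = real (card S) * g j0" by simp
  finally have a: "(\<Sum>j\<in>S. g j) \<le> real (card S) * g j0" .
  have "(\<Sum>j\<in>S. g j) powr p \<le> (real (card S) * g j0) powr p"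
    using a nn by (intro powr_mono2) (auto simp: sum_nonneg less_imp_le[OF p])
  also have "\<dots> = real (card S) powr p * g j0 powr p" by (rule powr_mult)
  also have "g j0 powr p \<le> (\<Sum>j\<in>S. g j powr p)"
    using fin j0(1) by (intro member_le_sum) auto
  then have "real (card S) powr p * g j0 powr p \<le> real (card S) powr p * (\<Sum>j\<in>S. g j powr p)"
    by (intro mult_left_mono) auto
  finally show ?thesis .
qed

lemma powr3_le:
  fixes a b c p :: real
  assumes "0 \<le> a" "0 \<le> b" "0 \<le> c" "p > 0"
  shows "(a + b + c) powr p \<le> 3 powr p * (a powr p + b powr p + c powr p)"
proof -
  have "(\<Sum>j\<in>{0::nat,1,2}. ([a,b,c]!j)) powr p \<le> real (card {0::nat,1,2}) powr p * (\<Sum>j\<in>{0::nat,1,2}. ([a,b,c]!j) powr p)"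
    using assms by (intro powr_sum_le) (auto simp: less_Suc_eq numeral_2_eq_2)
  then show ?thesis by (simp add: add.assoc)
qed

lemma Q_sum_bound:
  fixes g :: "'i \<Rightarrow> real^4 \<Rightarrow> real" and S :: "'i set"
  assumes fin: "finite S" and meas: "\<And>j. j \<in> S \<Longrightarrow> g j \<in> borel_measurable lborel"
    and nn: "\<And>j x. j \<in> S \<Longrightarrow> 0 \<le> g j x" and bnd: "\<And>j. j \<in> S \<Longrightarrow> Q (g j) \<le> ennreal M"
    and M: "M \<ge> 0"
  shows "(\<integral>\<^sup>+x. ennreal ((\<Sum>j\<in>S. g j x) powr (4/3)) \<partial>lborel) \<le> ennreal (real (card S) powr (4/3) * (real (card S) * M))"
proof -
  define c where "c = real (card S) powr (4/3)"
  define f where "f = (\<lambda>j x. ennreal (\<bar>g j x\<bar> powr (4/3)))"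
  have c0: "c \<ge> 0" unfolding c_def by simp
  have mf: "f j \<in> borel_measurable lborel" if j: "j \<in> S" for j
  proof -
    have [measurable]: "g j \<in> borel_measurable lborel" by (rule meas[OF j])
    show ?thesis unfolding f_def by measurable
  qed
  have msum: "(\<lambda>x. \<Sum>j\<in>S. f j x) \<in> borel_measurable lborel"
    by (rule borel_measurable_sum) (rule mf)
  have pw: "ennreal ((\<Sum>j\<in>S. g j x) powr (4/3)) \<le> ennreal c * (\<Sum>j\<in>S. f j x)" for x
  proof -
    have "(\<Sum>j\<in>S. g j x) powr (4/3) \<le> c * (\<Sum>j\<in>S. g j x powr (4/3))"
      unfolding c_def using fin nn by (intro powr_sum_le) auto
    also have "(\<Sum>j\<in>S. g j x powr (4/3)) = (\<Sum>j\<in>S. \<bar>g j x\<bar> powr (4/3))"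
      by (intro sum.cong refl) (simp add: nn)
    finally have "ennreal ((\<Sum>j\<in>S. g j x) powr (4/3)) \<le> ennreal (c * (\<Sum>j\<in>S. \<bar>g j x\<bar> powr (4/3)))"
      by (rule ennreal_leI)
    also have "\<dots> = ennreal c * ennreal (\<Sum>j\<in>S. \<bar>g j x\<bar> powr (4/3))" by (rule ennreal_mult'[OF c0])
    also have "ennreal (\<Sum>j\<in>S. \<bar>g j x\<bar> powr (4/3)) = (\<Sum>j\<in>S. f j x)"
      unfolding f_def by (rule sum_ennreal[symmetric]) simp
    finally show ?thesis .
  qed
  have "(\<integral>\<^sup>+x. ennreal ((\<Sum>j\<in>S. g j x) powr (4/3)) \<partial>lborel) \<le> (\<integral>\<^sup>+x. ennreal c * (\<Sum>j\<in>S. f j x) \<partial>lborel)"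
    by (rule nn_integral_mono) (rule pw)
  also have "\<dots> = ennreal c * (\<integral>\<^sup>+x. (\<Sum>j\<in>S. f j x) \<partial>lborel)"
    by (rule nn_integral_cmult[OF msum])
  also have "(\<integral>\<^sup>+x. (\<Sum>j\<in>S. f j x) \<partial>lborel) = (\<Sum>j\<in>S. (\<integral>\<^sup>+x. f j x \<partial>lborel))"
    by (rule nn_integral_sum) (rule mf)
  also have "\<dots> = (\<Sum>j\<in>S. Q (g j))" unfolding Q_def f_def ..
  also have "ennreal c * (\<Sum>j\<in>S. Q (g j)) \<le> ennreal c * (\<Sum>j\<in>S. ennreal M)"
    by (intro mult_left_mono sum_mono bnd) auto
  also have "\<dots> = ennreal (c * (real (card S) * M))" using c0 M by (simp add: ennreal_mult ennreal_of_nat_eq_real_of_nat)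
  finally show ?thesis unfolding c_def .
qed

lemma Q_three:
  fixes F A B C :: "real^4 \<Rightarrow> real"
  assumes mA: "A \<in> borel_measurable lborel" and mB: "B \<in> borel_measurable lborel" and mC: "C \<in> borel_measurable lborel"
    and nn: "\<And>x. 0 \<le> A x" "\<And>x. 0 \<le> B x" "\<And>x. 0 \<le> C x"
    and dom: "\<And>x. \<bar>F x\<bar> \<le> W * (A x + B x + C x)" and W: "W \<ge> 0"
    and IA: "(\<integral>\<^sup>+x. ennreal ((A x) powr (4/3)) \<partial>lborel) \<le> ennreal MA"
    and IB: "(\<integral>\<^sup>+x. ennreal ((B x) powr (4/3)) \<partial>lborel) \<le> ennreal MB"
    and IC: "(\<integral>\<^sup>+x. ennreal ((C x) powr (4/3)) \<partial>lborel) \<le> ennreal MC"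
    and M: "MA \<ge> 0" "MB \<ge> 0" "MC \<ge> 0"
  shows "Q F \<le> ennreal ((W * 3) powr (4/3) * (MA + MB + MC))"
proof -
  define c where "c = (W * 3) powr (4/3)"
  have c0: "c \<ge> 0" unfolding c_def by simp
  have "Q F \<le> (\<integral>\<^sup>+x. ennreal c * (ennreal ((A x) powr (4/3)) + ennreal ((B x) powr (4/3)) + ennreal ((C x) powr (4/3))) \<partial>lborel)"
    unfolding Q_def
  proof (intro nn_integral_mono)
    fix x
    have "\<bar>F x\<bar> powr (4/3) \<le> (W * (A x + B x + C x)) powr (4/3)"
      using dom[of x] by (intro powr_mono2) auto
    also have "\<dots> = W powr (4/3) * (A x + B x + C x) powr (4/3)" by (rule powr_mult)
    also have "\<dots> \<le> W powr (4/3) * (3 powr (4/3) * ((A x) powr (4/3) + (B x) powr (4/3) + (C x) powr (4/3)))"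
      using nn by (intro mult_left_mono powr3_le) auto
    also have "\<dots> = c * ((A x) powr (4/3) + (B x) powr (4/3) + (C x) powr (4/3))"
      unfolding c_def by (simp add: powr_mult)
    finally have "ennreal (\<bar>F x\<bar> powr (4/3)) \<le> ennreal (c * ((A x) powr (4/3) + (B x) powr (4/3) + (C x) powr (4/3)))"
      by (rule ennreal_leI)
    also have "\<dots> = ennreal c * (ennreal ((A x) powr (4/3)) + ennreal ((B x) powr (4/3)) + ennreal ((C x) powr (4/3)))"
      using c0 by (simp add: ennreal_mult ennreal_plus)
    finally show "ennreal (\<bar>F x\<bar> powr (4/3)) \<le> ennreal c * (ennreal ((A x) powr (4/3)) + ennreal ((B x) powr (4/3)) + ennreal ((C x) powr (4/3)))" .
  qed
  also have "\<dots> = ennreal c * ((\<integral>\<^sup>+x. ennreal ((A x) powr (4/3)) \<partial>lborel) + (\<integral>\<^sup>+x. ennreal ((B x) powr (4/3)) \<partial>lborel)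
                     + (\<integral>\<^sup>+x. ennreal ((C x) powr (4/3)) \<partial>lborel))"
    using mA mB mC by (simp add: nn_integral_cmult nn_integral_add)
  also have "\<dots> \<le> ennreal c * (ennreal MA + ennreal MB + ennreal MC)"
    by (intro mult_left_mono add_mono IA IB IC) auto
  also have "\<dots> = ennreal (c * (MA + MB + MC))" using c0 M by (simp add: ennreal_mult ennreal_plus)
  finally show ?thesis unfolding c_def .
qed

lemma Q_final:
  fixes F :: "real^4 \<Rightarrow> real"
  assumes m: "F \<in> borel_measurable lborel" and QF: "Q F \<le> ennreal B" and B: "B \<ge> 0"
  shows "in_Lp (4/3) F" and "Lp_norm (4/3) F \<le> B powr (3/4)"
proof -
  have mf: "(\<lambda>x. \<bar>F x\<bar> powr (4/3)) \<in> borel_measurable lborel" using m by measurable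
  have int: "integrable lborel (\<lambda>x. \<bar>F x\<bar> powr (4/3))"
  proof (rule integrableI_bounded[OF mf])
    have "(\<integral>\<^sup>+x. ennreal (norm (\<bar>F x\<bar> powr (4/3))) \<partial>lborel) = Q F" unfolding Q_def by simp
    also have "\<dots> < \<infinity>" using QF by (simp add: le_less_trans)
    finally show "(\<integral>\<^sup>+x. ennreal (norm (\<bar>F x\<bar> powr (4/3))) \<partial>lborel) < \<infinity>" .
  qed
  show "in_Lp (4/3) F" unfolding in_Lp_def using m int by simp
  have "ennreal (\<integral>x. \<bar>F x\<bar> powr (4/3) \<partial>lborel) = Q F"
    unfolding Q_def by (rule nn_integral_eq_integral[OF int, symmetric]) simp
  then have "ennreal (\<integral>x. \<bar>F x\<bar> powr (4/3) \<partial>lborel) \<le> ennreal B" using QF by simp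
  then have I: "(\<integral>x. \<bar>F x\<bar> powr (4/3) \<partial>lborel) \<le> B" using B by simp
  have I0: "0 \<le> (\<integral>x. \<bar>F x\<bar> powr (4/3) \<partial>lborel)" by (rule integral_nonneg_AE) simp
  show "Lp_norm (4/3) F \<le> B powr (3/4)"
    unfolding Lp_norm_def using I I0 by (simp add: powr_mono2)
qed



lemma delta_small:
  fixes b d :: real
  assumes b: "-1/4 \<le> b" "b < 0" and d: "0 < d" "d < exp (- 1 / sqrt \<bar>b\<bar>)"
  shows "d \<le> 1/2" "d \<le> 2 * \<bar>b\<bar>"
proof -
  define s where "s = sqrt \<bar>b\<bar>"
  have s0: "s > 0" unfolding s_def using b by simp
  have s2: "s^2 = \<bar>b\<bar>" unfolding s_def by simp
  have "s \<le> sqrt (1/4)" unfolding s_def using b by (intro real_sqrt_le_mono) auto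
  also have "sqrt (1/4) = (1/2::real)" by (simp add: real_sqrt_divide)
  finally have sh: "s \<le> 1/2" .
  define y where "y = 1 / s"
  have y0: "y > 0" unfolding y_def using s0 by simp
  have y2: "y \<ge> 2" unfolding y_def using s0 sh by (simp add: field_simps)
  have ey: "1 + y + y^2/2 \<le> exp y" using exp_lower_Taylor_quadratic[of y] y0 by simp
  have de: "d < 1 / exp y" using d(2) unfolding y_def s_def by (simp add: exp_minus divide_inverse)
  have "exp y \<ge> 2" using ey y2 by (smt (verit) zero_le_power2 divide_nonneg_pos)
  then have "1 / exp y \<le> 1/2" by (simp add: field_simps)
  then show "d \<le> 1/2" using de by linarith
  have "y^2/2 \<le> exp y" using ey y0 by simp
  moreover have "y^2/2 > 0" using y0 by simp
  ultimately have "1 / exp y \<le> 1 / (y^2/2)" by (intro divide_left_mono) auto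
  also have "1 / (y^2/2) = 2 * s^2" unfolding y_def using s0 by (simp add: field_simps power2_eq_square)
  finally show "d \<le> 2 * \<bar>b\<bar>" using de s2 by simp
qed

lemma bb_meas[measurable]: "bb d c \<in> borel_measurable borel"
  unfolding bb_def by measurable

lemma U_meas[measurable]: "U \<in> borel_measurable borel"
  unfolding U_def by measurable



lemma powr_conv:
  fixes b c d X :: real assumes "b > 0" "d > 0" "c \<ge> 0" "X \<ge> 0"
  shows "((b * c) powr (4/3) * (X * d powr (4/3))) powr (3/4) = (c powr (4/3) * X) powr (3/4) * (b * d)"
proof -
  have "(b * c) powr (4/3) * (X * d powr (4/3)) = (c powr (4/3) * X) * ((b * d) powr (4/3))"
    by (simp add: powr_mult mult_ac)
  also have "\<dots> powr (3/4) = (c powr (4/3) * X) powr (3/4) * ((b * d) powr (4/3)) powr (3/4)"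
    by (rule powr_mult)
  also have "((b * d) powr (4/3)) powr (3/4) = b * d" using assms by (simp add: powr_powr)
  finally show ?thesis .
qed

definition "M1c = (2 * sqrt 2) powr (8/3) * (2 * (2 powr (2/3) / (2*(2/3)-1)))^4"
definition "M2c = (64 * 4 powr (4/3) * 4^4
            + 8 powr (4/3) * (2 * sqrt 2) powr (4/3) * (2 * (2 powr (1/3) / (1-2*(1/3))) * (1+2) powr (1-2*(1/3)))^4)"

lemma M1c_nn: "M1c \<ge> 0" unfolding M1c_def by simp
lemma M2c_nn: "M2c \<ge> 0" unfolding M2c_def by (intro add_nonneg_nonneg mult_nonneg_nonneg) auto

lemma sum_sq_le_card:
  fixes f :: "nat \<Rightarrow> real"
  shows "(\<Sum>l\<in>{1..k}. f l)^2 \<le> real k * (\<Sum>l\<in>{1..k}. (f l)^2)"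
  using sq_sum_le[of "{1..k}" f] by simp

theorem proposition3p2:
  fixes q k :: nat and \<alpha> :: real
  assumes "q \<ge> 2" and "k \<ge> 2"
  shows "\<exists>\<beta>0 < 0. \<exists>C. \<forall>\<beta> \<delta>.
     \<beta>0 \<le> \<beta> \<and> \<beta> < 0 \<and> 0 < \<delta> \<and> \<delta> < exp (- 1 / sqrt \<bar>\<beta>\<bar>) \<longrightarrow>
     (let F1 = (\<lambda>x. \<beta> * U x * (\<Sum>r=1..q. (V_r q k \<delta> r x)^2));
          F2 = (\<lambda>x. laplacian (V_tilde k \<delta>) x + (V_tilde k \<delta> x)^3
                    + \<beta> * (U x)^2 * V_tilde k \<delta> x
                    + \<alpha> * V_tilde k \<delta> x * (\<Sum>r=2..q. (V_r q k \<delta> r x)^2))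
      in in_Lp (4/3) F1 \<and> in_Lp (4/3) F2 \<and>
         Lp_norm (4/3) F1 + Lp_norm (4/3) F2 \<le> C * \<bar>\<beta>\<bar> * \<delta>)"
proof -
  obtain m where m0: "m > 0"
    and mA: "\<forall>a\<in>{1..k}. \<forall>b\<in>{1..k}. a \<noteq> b \<longrightarrow> m \<le> norm (Pk k a - Pk k b)"
    and mB: "\<forall>r\<in>{2..q}. \<forall>a\<in>{1..k}. \<forall>l\<in>{1..k}. m \<le> norm (rotT (theta q r) (Pk k a) - Pk k l)"
    using dmin_exists[of k q] by blast
  define sg where "sg = m / 2"
  have sg0: "sg > 0" unfolding sg_def using m0 by simp
  define E0 where "E0 = 16 * sqrt 2 / sg^2"
  have E00: "E0 \<ge> 0" unfolding E0_def by simp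
  define W2 where "W2 = 4 * E0 * (real k)^2 + 1 + 2 * \<bar>\<alpha>\<bar> * E0 * (real k)^2 * real q"
  have W20: "W2 \<ge> 0" unfolding W2_def using E00 by simp
  define W1 where "W1 = 2 * sqrt 2 * real k"
  have W10: "W1 \<ge> 0" unfolding W1_def by simp
  define X1 where "X1 = (real q * real k) powr (4/3) * (real q * real k) * M1c"
  define X2 where "X2 = real k powr (4/3) * real k * M1c + real k powr (4/3) * real k * M2c
                      + (real (q - 1) * real k) powr (4/3) * (real (q - 1) * real k) * M1c"
  have X10: "X1 \<ge> 0" unfolding X1_def using M1c_nn by simp
  have X20: "X2 \<ge> 0" unfolding X2_def using M1c_nn M2c_nn by (intro add_nonneg_nonneg mult_nonneg_nonneg) auto
  define C where "C = (W1 powr (4/3) * (3 powr (4/3) * X1)) powr (3/4) + (W2 powr (4/3) * (3 powr (4/3) * X2)) powr (3/4)"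
  have key: "(let F1 = (\<lambda>x. \<beta> * U x * (\<Sum>r=1..q. (V_r q k \<delta> r x)^2));
          F2 = (\<lambda>x. laplacian (V_tilde k \<delta>) x + (V_tilde k \<delta> x)^3
                    + \<beta> * (U x)^2 * V_tilde k \<delta> x
                    + \<alpha> * V_tilde k \<delta> x * (\<Sum>r=2..q. (V_r q k \<delta> r x)^2))
      in in_Lp (4/3) F1 \<and> in_Lp (4/3) F2 \<and>
         Lp_norm (4/3) F1 + Lp_norm (4/3) F2 \<le> C * \<bar>\<beta>\<bar> * \<delta>)"
    if H: "-1/4 \<le> \<beta> \<and> \<beta> < 0 \<and> 0 < \<delta> \<and> \<delta> < exp (- 1 / sqrt \<bar>\<beta>\<bar>)" for \<beta> \<delta> :: real
  proof -
    from H have b: "-1/4 \<le> \<beta>" "\<beta> < 0" and d: "0 < \<delta>" "\<delta> < exp (- 1 / sqrt \<bar>\<beta>\<bar>)" by auto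
    have dh: "\<delta> \<le> 1/2" and db: "\<delta> \<le> 2 * \<bar>\<beta>\<bar>" using delta_small[OF b d] by auto
    have ab: "\<bar>\<beta>\<bar> > 0" using b by simp
    define xi where "xi = xi_tilde k \<delta>"
    define et where "et = eta q k \<delta>"
    define u where "u = (\<lambda>l x. bb \<delta> (xi l) x)"
    define v where "v = (\<lambda>r l x. bb \<delta> (et r l) x)"
    define eps where "eps = 8 * sqrt 2 * \<delta> / sg^2"
    have eps0: "eps \<ge> 0" unfolding eps_def using d by simp
    have epsb: "eps \<le> E0 * \<bar>\<beta>\<bar>"
    proof -
      have "eps = (8 * sqrt 2 / sg^2) * \<delta>" unfolding eps_def by simp
      also have "\<dots> \<le> (8 * sqrt 2 / sg^2) * (2 * \<bar>\<beta>\<bar>)" using db by (intro mult_left_mono) auto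
      also have "\<dots> = E0 * \<bar>\<beta>\<bar>" unfolding E0_def by simp
      finally show ?thesis .
    qed
    have u0: "u l x > 0" for l x unfolding u_def using bb_pos[OF d(1)] by simp
    have v0: "v r l x > 0" for r l x unfolding v_def using bb_pos[OF d(1)] by simp
    have hV: "V_tilde k \<delta> x = (\<Sum>l\<in>{1..k}. u l x)" for x
      unfolding u_def xi_def using V_tilde_bb[OF d(1)] by simp
    have hVf: "V_tilde k \<delta> = (\<lambda>x. \<Sum>l\<in>{1..k}. u l x)" using hV by blast
    have hVr: "V_r q k \<delta> r x = (\<Sum>l\<in>{1..k}. v r l x)" for r x
      unfolding v_def et_def using V_r_bb[OF d(1)] by simp
    have hlap: "laplacian (V_tilde k \<delta>) x = - (\<Sum>l\<in>{1..k}. (u l x)^3)" for x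
      unfolding hVf u_def by (rule lap_sum[OF d(1)])
    have pairA: "u a x * u b x \<le> eps * (u a x + u b x)" if "a \<in> {1..k}" "b \<in> {1..k}" "a \<noteq> b" for a b x
      unfolding u_def eps_def xi_def
      by (rule bb_pair[OF d(1) sg0]) (unfold sg_def, rule sepA[OF mA m0 _ dh that], use d in simp)
    have pairB: "u a x * v r l x \<le> eps * (u a x + v r l x)" if "r \<in> {2..q}" "a \<in> {1..k}" "l \<in> {1..k}" for r a l x
      unfolding u_def v_def eps_def xi_def et_def
      by (rule bb_pair[OF d(1) sg0]) (unfold sg_def, rule sepB[OF mB m0 _ dh that], use d in simp)
    define A where "A = (\<lambda>x. \<Sum>l\<in>{1..k}. (u l x)^2)"
    define B where "B = (\<lambda>x. \<Sum>l\<in>{1..k}. (U x)^2 * u l x)"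
    define Cq where "Cq = (\<lambda>x. \<Sum>p\<in>{2..q}\<times>{1..k}. (v (fst p) (snd p) x)^2)"
    define C1 where "C1 = (\<lambda>x. \<Sum>p\<in>{1..q}\<times>{1..k}. (v (fst p) (snd p) x)^2)"
    define Z where "Z = (\<lambda>x::real^4. 0::real)"
    have A0: "A x \<ge> 0" for x unfolding A_def by (simp add: sum_nonneg)
    have B0: "B x \<ge> 0" for x unfolding B_def using u0 by (simp add: sum_nonneg less_imp_le)
    have Cq0: "Cq x \<ge> 0" for x unfolding Cq_def by (simp add: sum_nonneg)
    have C10: "C1 x \<ge> 0" for x unfolding C1_def by (simp add: sum_nonneg)
    have mAf: "A \<in> borel_measurable lborel" unfolding A_def u_def by measurable
    have mBf: "B \<in> borel_measurable lborel" unfolding B_def u_def by measurable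
    have mCq: "Cq \<in> borel_measurable lborel" unfolding Cq_def v_def by measurable
    have mC1: "C1 \<in> borel_measurable lborel" unfolding C1_def v_def by measurable
    have mZ: "Z \<in> borel_measurable lborel" unfolding Z_def by measurable
    define F1 where "F1 = (\<lambda>x. \<beta> * U x * (\<Sum>r=1..q. (V_r q k \<delta> r x)^2))"
    define F2 where "F2 = (\<lambda>x. laplacian (V_tilde k \<delta>) x + (V_tilde k \<delta> x)^3
                    + \<beta> * (U x)^2 * V_tilde k \<delta> x
                    + \<alpha> * V_tilde k \<delta> x * (\<Sum>r=2..q. (V_r q k \<delta> r x)^2))"
    have F1e: "F1 = (\<lambda>x. \<beta> * U x * (\<Sum>r=1..q. (\<Sum>l\<in>{1..k}. v r l x)^2))"
      unfolding F1_def hVr ..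
    have F2e: "F2 = (\<lambda>x. - (\<Sum>l\<in>{1..k}. (u l x)^3) + (\<Sum>l\<in>{1..k}. u l x)^3
                    + \<beta> * (U x)^2 * (\<Sum>l\<in>{1..k}. u l x)
                    + \<alpha> * (\<Sum>l\<in>{1..k}. u l x) * (\<Sum>r=2..q. (\<Sum>l\<in>{1..k}. v r l x)^2))"
      unfolding F2_def hVr hV hlap ..
    have mF1: "F1 \<in> borel_measurable lborel" unfolding F1e v_def by measurable
    have mF2: "F2 \<in> borel_measurable lborel" unfolding F2e u_def v_def by measurable
    have card_K: "card {1..k} = k" by simp
    have dom1: "\<bar>F1 x\<bar> \<le> (\<bar>\<beta>\<bar> * W1) * (Z x + Z x + C1 x)" for x
    proof -
      define S1 where "S1 = (\<Sum>r=1..q. (\<Sum>l\<in>{1..k}. v r l x)^2)"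
      have S10: "S1 \<ge> 0" unfolding S1_def by (simp add: sum_nonneg)
      have S1b: "S1 \<le> real k * C1 x"
      proof -
        have "S1 \<le> (\<Sum>r=1..q. real k * (\<Sum>l\<in>{1..k}. (v r l x)^2))"
          unfolding S1_def by (intro sum_mono sum_sq_le_card)
        also have "\<dots> = real k * (\<Sum>r\<in>{1..q}. \<Sum>l\<in>{1..k}. (v r l x)^2)" by (simp add: sum_distrib_left)
        also have "(\<Sum>r\<in>{1..q}. \<Sum>l\<in>{1..k}. (v r l x)^2) = C1 x"
          unfolding C1_def by (simp add: sum.cartesian_product case_prod_beta)
        finally show ?thesis .
      qed
      have Ux: "0 < U x" "U x \<le> 2 * sqrt 2" using U_pos U_le by auto
      have "\<bar>F1 x\<bar> = \<bar>\<beta>\<bar> * U x * S1" unfolding F1e S1_def[symmetric] using Ux S10 by (simp add: abs_mult)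
      also have "\<dots> \<le> \<bar>\<beta>\<bar> * (2 * sqrt 2) * (real k * C1 x)"
        using Ux S10 S1b C10 by (intro mult_mono mult_left_mono) auto
      also have "\<dots> = (\<bar>\<beta>\<bar> * W1) * (Z x + Z x + C1 x)" unfolding W1_def Z_def by simp
      finally show ?thesis .
    qed
    have dom2: "\<bar>F2 x\<bar> \<le> (\<bar>\<beta>\<bar> * W2) * (A x + B x + Cq x)" for x
    proof -
      define S where "S = (\<Sum>l\<in>{1..k}. u l x)"
      define T where "T = (\<Sum>r=2..q. (\<Sum>l\<in>{1..k}. v r l x)^2)"
      have S0: "S \<ge> 0" unfolding S_def using u0 by (simp add: sum_nonneg less_imp_le)
      have T0: "T \<ge> 0" unfolding T_def by (simp add: sum_nonneg)
      have cub1: "0 \<le> S^3 - (\<Sum>l\<in>{1..k}. (u l x)^3)"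
        unfolding S_def using cubic_bound(1)[of "{1..k}" eps "\<lambda>l. u l x"] eps0 u0 pairA by (simp add: less_imp_le)
      have cub2: "S^3 - (\<Sum>l\<in>{1..k}. (u l x)^3) \<le> 4 * eps * (real k)^2 * A x"
        unfolding S_def A_def using cubic_bound(2)[of "{1..k}" eps "\<lambda>l. u l x"] eps0 u0 pairA by (simp add: less_imp_le)
      have ST: "S * T \<le> 2 * eps * (real k)^2 * (real q * A x + Cq x)"
      proof -
        have "S * T = (\<Sum>r=2..q. S * (\<Sum>l\<in>{1..k}. v r l x)^2)" unfolding T_def by (simp add: sum_distrib_left)
        also have "\<dots> \<le> (\<Sum>r=2..q. eps * (real k + real k) * (real k * A x + real k * (\<Sum>l\<in>{1..k}. (v r l x)^2)))"
        proof (intro sum_mono)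
          fix r assume r: "r \<in> {2..q}"
          show "S * (\<Sum>l\<in>{1..k}. v r l x)^2 \<le> eps * (real k + real k) * (real k * A x + real k * (\<Sum>l\<in>{1..k}. (v r l x)^2))"
            unfolding S_def A_def
            using alpha_bound[of "{1..k}" "{1..k}" eps "\<lambda>l. u l x" "\<lambda>l. v r l x"] eps0 u0 v0 pairB[OF r]
            by (simp add: less_imp_le)
        qed
        also have "\<dots> = 2 * eps * (real k)^2 * (real (card {2..q}) * A x + (\<Sum>r\<in>{2..q}. \<Sum>l\<in>{1..k}. (v r l x)^2))"
          by (simp add: sum.distrib sum_distrib_left[symmetric] power2_eq_square algebra_simps)
        also have "(\<Sum>r\<in>{2..q}. \<Sum>l\<in>{1..k}. (v r l x)^2) = Cq x"
          unfolding Cq_def by (simp add: sum.cartesian_product case_prod_beta)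
        also have "2 * eps * (real k)^2 * (real (card {2..q}) * A x + Cq x) \<le> 2 * eps * (real k)^2 * (real q * A x + Cq x)"
          using eps0 A0[of x] by (intro mult_left_mono add_right_mono mult_right_mono) auto
        finally show ?thesis .
      qed
      have UB: "(U x)^2 * S = B x" unfolding S_def B_def by (simp add: sum_distrib_left)
      define P where "P = S^3 - (\<Sum>l\<in>{1..k}. (u l x)^3)"
      have e: "F2 x = P + \<beta> * B x + \<alpha> * (S * T)"
        unfolding F2e S_def T_def P_def UB[symmetric] by (simp add: algebra_simps)
      have t1: "\<bar>P + \<beta> * B x + \<alpha> * (S * T)\<bar> \<le> \<bar>P + \<beta> * B x\<bar> + \<bar>\<alpha> * (S * T)\<bar>" by (rule abs_triangle_ineq)
      have t2: "\<bar>P + \<beta> * B x\<bar> \<le> \<bar>P\<bar> + \<bar>\<beta> * B x\<bar>" by (rule abs_triangle_ineq)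
      have a1: "\<bar>P\<bar> = P" using cub1 unfolding P_def by simp
      have a2: "\<bar>\<beta> * B x\<bar> = \<bar>\<beta>\<bar> * B x" using B0[of x] by (simp add: abs_mult)
      have a3: "\<bar>\<alpha> * (S * T)\<bar> = \<bar>\<alpha>\<bar> * (S * T)" using S0 T0 by (simp add: abs_mult)
      have "\<bar>F2 x\<bar> \<le> P + \<bar>\<beta>\<bar> * B x + \<bar>\<alpha>\<bar> * (S * T)"
        using t1 t2 unfolding e a1 a2 a3 by linarith
      also have "\<dots> \<le> 4 * eps * (real k)^2 * A x + \<bar>\<beta>\<bar> * B x + \<bar>\<alpha>\<bar> * (2 * eps * (real k)^2 * (real q * A x + Cq x))"
        using cub2 ST unfolding P_def by (intro add_mono mult_left_mono) auto
      also have "\<dots> \<le> 4 * (E0 * \<bar>\<beta>\<bar>) * (real k)^2 * A x + \<bar>\<beta>\<bar> * B x + \<bar>\<alpha>\<bar> * (2 * (E0 * \<bar>\<beta>\<bar>) * (real k)^2 * (real q * A x + Cq x))"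
        using epsb A0[of x] Cq0[of x] eps0 by (intro add_mono mult_left_mono mult_right_mono order_refl) auto
      also have "\<dots> = \<bar>\<beta>\<bar> * ((4 * E0 * (real k)^2 + 2 * \<bar>\<alpha>\<bar> * E0 * (real k)^2 * real q) * A x + B x + (2 * \<bar>\<alpha>\<bar> * E0 * (real k)^2) * Cq x)"
        by (simp add: algebra_simps)
      also have "\<dots> \<le> \<bar>\<beta>\<bar> * (W2 * A x + W2 * B x + W2 * Cq x)"
      proof -
        have c1: "4 * E0 * (real k)^2 + 2 * \<bar>\<alpha>\<bar> * E0 * (real k)^2 * real q \<le> W2" unfolding W2_def by simp
        have c2: "1 \<le> W2" unfolding W2_def using E00 by simp
        have c3: "2 * \<bar>\<alpha>\<bar> * E0 * (real k)^2 \<le> W2"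
        proof -
          have "2 * \<bar>\<alpha>\<bar> * E0 * (real k)^2 * 1 \<le> 2 * \<bar>\<alpha>\<bar> * E0 * (real k)^2 * real q"
            using \<open>q \<ge> 2\<close> E00 by (intro mult_left_mono) auto
          moreover have "0 \<le> 4 * E0 * (real k)^2" using E00 by simp
          ultimately show ?thesis unfolding W2_def by linarith
        qed
        have "(4 * E0 * (real k)^2 + 2 * \<bar>\<alpha>\<bar> * E0 * (real k)^2 * real q) * A x \<le> W2 * A x"
          using c1 A0[of x] by (rule mult_right_mono)
        moreover have "B x \<le> W2 * B x" using c2 B0[of x] mult_right_mono[OF c2 B0[of x]] by simp
        moreover have "(2 * \<bar>\<alpha>\<bar> * E0 * (real k)^2) * Cq x \<le> W2 * Cq x" using c3 Cq0[of x] by (rule mult_right_mono)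
        ultimately show ?thesis by (intro mult_left_mono) auto
      qed
      also have "\<dots> = (\<bar>\<beta>\<bar> * W2) * (A x + B x + Cq x)" by (simp add: algebra_simps)
      finally show ?thesis .
    qed
    have d1: "\<delta> \<le> 1" using dh by simp
    have mu: "(\<lambda>x. (u l x)^2) \<in> borel_measurable lborel" for l unfolding u_def by measurable
    have muB: "(\<lambda>x. (U x)^2 * u l x) \<in> borel_measurable lborel" for l unfolding u_def by measurable
    have mv: "(\<lambda>x. (v (fst p) (snd p) x)^2) \<in> borel_measurable lborel" for p unfolding v_def by measurable
    have QA: "Q (\<lambda>x. (u l x)^2) \<le> ennreal (M1c * \<delta> powr (4/3))" for l
      unfolding u_def M1c_def using Q_bb_sq[OF d(1)] by simp
    have QB: "Q (\<lambda>x. (U x)^2 * u l x) \<le> ennreal (M2c * \<delta> powr (4/3))" for l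
      unfolding u_def M2c_def xi_def using Q_U2_bb[OF d(1) d1 norm_xi[of \<delta> k l]] d(1) d1 by simp
    have QC: "Q (\<lambda>x. (v (fst p) (snd p) x)^2) \<le> ennreal (M1c * \<delta> powr (4/3))" for p
      unfolding v_def M1c_def using Q_bb_sq[OF d(1)] by simp
    have M1d: "M1c * \<delta> powr (4/3) \<ge> 0" using M1c_nn by simp
    have M2d: "M2c * \<delta> powr (4/3) \<ge> 0" using M2c_nn by simp
    have IA: "(\<integral>\<^sup>+x. ennreal ((A x) powr (4/3)) \<partial>lborel) \<le> ennreal (real k powr (4/3) * (real k * (M1c * \<delta> powr (4/3))))"
      using Q_sum_bound[of "{1..k}" "\<lambda>l x. (u l x)^2" "M1c * \<delta> powr (4/3)"] mu QA M1d unfolding A_def by simp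
    have IB: "(\<integral>\<^sup>+x. ennreal ((B x) powr (4/3)) \<partial>lborel) \<le> ennreal (real k powr (4/3) * (real k * (M2c * \<delta> powr (4/3))))"
      using Q_sum_bound[of "{1..k}" "\<lambda>l x. (U x)^2 * u l x" "M2c * \<delta> powr (4/3)"] muB QB M2d u0
      unfolding B_def by (simp add: less_imp_le)
    have cq: "card ({2..q} \<times> {1..k}) = (q - 1) * k" by (simp add: card_cartesian_product)
    have c1: "card ({1..q} \<times> {1..k}) = q * k" by (simp add: card_cartesian_product)
    have IC: "(\<integral>\<^sup>+x. ennreal ((Cq x) powr (4/3)) \<partial>lborel) \<le> ennreal ((real (q - 1) * real k) powr (4/3) * ((real (q - 1) * real k) * (M1c * \<delta> powr (4/3))))"
      using Q_sum_bound[of "{2..q} \<times> {1..k}" "\<lambda>p x. (v (fst p) (snd p) x)^2" "M1c * \<delta> powr (4/3)"] mv QC M1d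
      unfolding Cq_def cq by simp
    have IC1: "(\<integral>\<^sup>+x. ennreal ((C1 x) powr (4/3)) \<partial>lborel) \<le> ennreal ((real q * real k) powr (4/3) * ((real q * real k) * (M1c * \<delta> powr (4/3))))"
      using Q_sum_bound[of "{1..q} \<times> {1..k}" "\<lambda>p x. (v (fst p) (snd p) x)^2" "M1c * \<delta> powr (4/3)"] mv QC M1d
      unfolding C1_def c1 by simp
    have IZ: "(\<integral>\<^sup>+x. ennreal ((Z x) powr (4/3)) \<partial>lborel) \<le> ennreal 0" unfolding Z_def by simp
    have QF2: "Q F2 \<le> ennreal (((\<bar>\<beta>\<bar> * W2) * 3) powr (4/3) * (X2 * \<delta> powr (4/3)))"
    proof -
      have "Q F2 \<le> ennreal (((\<bar>\<beta>\<bar> * W2) * 3) powr (4/3) *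
             (real k powr (4/3) * (real k * (M1c * \<delta> powr (4/3))) + real k powr (4/3) * (real k * (M2c * \<delta> powr (4/3)))
              + (real (q - 1) * real k) powr (4/3) * ((real (q - 1) * real k) * (M1c * \<delta> powr (4/3)))))"
        by (rule Q_three[OF mAf mBf mCq A0 B0 Cq0 dom2 _ IA IB IC])
           (use W20 M1d M2d in \<open>auto intro!: mult_nonneg_nonneg\<close>)
      also have "real k powr (4/3) * (real k * (M1c * \<delta> powr (4/3))) + real k powr (4/3) * (real k * (M2c * \<delta> powr (4/3)))
              + (real (q - 1) * real k) powr (4/3) * ((real (q - 1) * real k) * (M1c * \<delta> powr (4/3))) = X2 * \<delta> powr (4/3)"
        unfolding X2_def by (simp add: algebra_simps)
      finally show ?thesis .
    qed
    have QF1: "Q F1 \<le> ennreal (((\<bar>\<beta>\<bar> * W1) * 3) powr (4/3) * (X1 * \<delta> powr (4/3)))"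
    proof -
      have "Q F1 \<le> ennreal (((\<bar>\<beta>\<bar> * W1) * 3) powr (4/3) *
             (0 + 0 + (real q * real k) powr (4/3) * ((real q * real k) * (M1c * \<delta> powr (4/3)))))"
        by (rule Q_three[OF mZ mZ mC1 _ _ C10 dom1 _ IZ IZ IC1])
           (use W10 M1d in \<open>auto intro!: mult_nonneg_nonneg simp: Z_def\<close>)
      also have "0 + 0 + (real q * real k) powr (4/3) * ((real q * real k) * (M1c * \<delta> powr (4/3))) = X1 * \<delta> powr (4/3)"
        unfolding X1_def by (simp add: algebra_simps)
      finally show ?thesis .
    qed
    have B1: "((\<bar>\<beta>\<bar> * W1) * 3) powr (4/3) * (X1 * \<delta> powr (4/3)) \<ge> 0" using X10 by simp
    have B2: "((\<bar>\<beta>\<bar> * W2) * 3) powr (4/3) * (X2 * \<delta> powr (4/3)) \<ge> 0" using X20 by simp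
    have L1: "in_Lp (4/3) F1" and N1: "Lp_norm (4/3) F1 \<le> (((\<bar>\<beta>\<bar> * W1) * 3) powr (4/3) * (X1 * \<delta> powr (4/3))) powr (3/4)"
      using Q_final[OF mF1 QF1 B1] by auto
    have L2: "in_Lp (4/3) F2" and N2: "Lp_norm (4/3) F2 \<le> (((\<bar>\<beta>\<bar> * W2) * 3) powr (4/3) * (X2 * \<delta> powr (4/3))) powr (3/4)"
      using Q_final[OF mF2 QF2 B2] by auto
    have e1: "(((\<bar>\<beta>\<bar> * W1) * 3) powr (4/3) * (X1 * \<delta> powr (4/3))) powr (3/4) = (W1 powr (4/3) * (3 powr (4/3) * X1)) powr (3/4) * (\<bar>\<beta>\<bar> * \<delta>)"
      using powr_conv[of "\<bar>\<beta>\<bar>" \<delta> "W1 * 3" X1] ab d(1) W10 X10 by (simp add: powr_mult mult_ac)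
    have e2: "(((\<bar>\<beta>\<bar> * W2) * 3) powr (4/3) * (X2 * \<delta> powr (4/3))) powr (3/4) = (W2 powr (4/3) * (3 powr (4/3) * X2)) powr (3/4) * (\<bar>\<beta>\<bar> * \<delta>)"
      using powr_conv[of "\<bar>\<beta>\<bar>" \<delta> "W2 * 3" X2] ab d(1) W20 X20 by (simp add: powr_mult mult_ac)
    have "Lp_norm (4/3) F1 + Lp_norm (4/3) F2 \<le> C * \<bar>\<beta>\<bar> * \<delta>"
      using N1 N2 unfolding e1 e2 C_def by (simp add: algebra_simps)
    then show ?thesis using L1 L2 unfolding Let_def F1_def F2_def by simp
  qed
  show ?thesis
    apply (rule exI[of _ "-1/4"])
    apply (rule conjI)
     apply simp
    apply (rule exI[of _ C])
    apply (intro allI impI)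
    apply (erule key)
    done
qed


end
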